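(* Let $n\ge2$, $k,\nu\in\mathbb{C}$. For a smooth function $\varphi$ on an open subset of $\mathbb{R}_{>0}^n$ satisfying $(\vartheta_1+\cdots+\vartheta_n)\varphi=0$, write (via $y_i=z_i/z_n$, $1\le i\le n-1$) $\varphi=(y_1\cdots y_{n-1})^{-\nu/n}u(y_1,\dots,y_{n-1})$. Then $\varphi$ satisfies \[ \Delta_{ij}\varphi=-\frac{\nu(\nu+nk)}{n^2}\varphi\qquad(1\le i<j\le n) \] if and only if $u$ satisfies Lauricella's system $(E_D)$ in the variables $y_1,\dots,y_{n-1}$ with parameters $\alpha=-\nu$, $\beta_1=\cdots=\beta_{n-1}=k$, $\gamma=-\nu-k+1$. Moreover, in the variables $x_i=1-y_i$ the same system for $u$ is equivalent to $(E_D)$ in $x_1,\dots,x_{n-1}$ with parameters $\alpha=-\nu$, $\beta_1=\cdots=\beta_{n-1}=k$, $\gamma=nk$.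
   Context: $\vartheta_i=z_i\partial/\partial z_i$. For $1\le i<j\le n$, $\Delta_{ij}=\vartheta_i\vartheta_j-\frac{k}{2}\frac{z_i+z_j}{z_i-z_j}(\vartheta_i-\vartheta_j)+\bigl(\frac{\nu}{n}+\frac{k}{2}\bigr)(\vartheta_i+\vartheta_j)$. The condition $(\vartheta_1+\cdots+\vartheta_n)\varphi=0$ means $\varphi$ is homogeneous of degree 0, hence a function of $y_1,\dots,y_{n-1}$. Lauricella's system $(E_D)$ in variables $t_1,\dots,t_{m}$ ($m=n-1$) with parameters $\alpha,\beta_1,\dots,\beta_m,\gamma$, writing $\vartheta_i=t_i\partial/\partial t_i$: $t_i(\vartheta_i+\beta_i)\vartheta_jF=t_j(\vartheta_j+\beta_j)\vartheta_iF$ for $1\le i<j\le m$, and $\vartheta_i(\vartheta_1+\cdots+\vartheta_m+\gamma-1)F=t_i(\vartheta_i+\beta_i)(\vartheta_1+\cdots+\vartheta_m+\alpha)F$ for $1\le i\le m$. *)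

theory Defs
  imports "HOL-Analysis.Analysis"
begin

definition pd :: "'i::finite \<Rightarrow> (real^'i \<Rightarrow> complex) \<Rightarrow> real^'i \<Rightarrow> complex" where
  "pd i f z = vector_derivative (\<lambda>t. f (z + t *\<^sub>R axis i 1)) (at 0)"

fun iter_pd :: "'i::finite list \<Rightarrow> (real^'i \<Rightarrow> complex) \<Rightarrow> real^'i \<Rightarrow> complex" where
  "iter_pd [] f = f"
| "iter_pd (i # is) f = pd i (iter_pd is f)"

definition smooth_on :: "(real^'i::finite) set \<Rightarrow> (real^'i \<Rightarrow> complex) \<Rightarrow> bool" where
  "smooth_on U f \<longleftrightarrow>
     (\<forall>is. continuous_on U (iter_pd is f) \<and>
       (\<forall>i. \<forall>z\<in>U. (\<lambda>t. iter_pd is f (z + t *\<^sub>R axis i 1)) differentiable (at 0)))"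

definition theta :: "'i::finite \<Rightarrow> (real^'i \<Rightarrow> complex) \<Rightarrow> real^'i \<Rightarrow> complex" where
  "theta i f = (\<lambda>z. complex_of_real (z $ i) * pd i f z)"

definition theta_sum :: "(real^'i::finite \<Rightarrow> complex) \<Rightarrow> real^'i \<Rightarrow> complex" where
  "theta_sum f = (\<lambda>z. \<Sum>i\<in>UNIV. theta i f z)"

definition Delta :: "complex \<Rightarrow> complex \<Rightarrow> 'i::finite \<Rightarrow> 'i \<Rightarrow> (real^'i \<Rightarrow> complex) \<Rightarrow> real^'i \<Rightarrow> complex" where
  "Delta k \<nu> i j f z =
     theta i (theta j f) z
     - k / 2 * (complex_of_real (z $ i + z $ j) / complex_of_real (z $ i - z $ j))
         * (theta i f z - theta j f z)
     + (\<nu> / of_nat CARD('i) + k / 2) * (theta i f z + theta j f z)"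

text \<open>Index order on {1..n} encoded as 'm option: Some a = index a in {1..n-1},
None = index n (the largest).\<close>

definition idx_less :: "'m::linorder option \<Rightarrow> 'm option \<Rightarrow> bool" where
  "idx_less i j = (case (i, j) of
      (Some a, Some b) \<Rightarrow> a < b
    | (Some a, None) \<Rightarrow> True
    | _ \<Rightarrow> False)"

definition ymap :: "real^(('m::finite) option) \<Rightarrow> real^'m" where
  "ymap z = (\<chi> a. z $ Some a / z $ None)"

definition lauricella_ED ::
  "complex \<Rightarrow> ('m::{finite,linorder} \<Rightarrow> complex) \<Rightarrow> complex
     \<Rightarrow> (real, 'm) vec set \<Rightarrow> ((real, 'm) vec \<Rightarrow> complex) \<Rightarrow> bool" where
  "lauricella_ED \<alpha> \<beta> \<gamma> V F \<longleftrightarrow>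
     (\<forall>i j. i < j \<longrightarrow> (\<forall>t\<in>V.
        complex_of_real (t $ i) * (theta i (theta j F) t + \<beta> i * theta j F t)
        = complex_of_real (t $ j) * (theta j (theta i F) t + \<beta> j * theta i F t)))
   \<and> (\<forall>i. \<forall>t\<in>V.
        theta i (\<lambda>s. theta_sum F s + (\<gamma> - 1) * F s) t
        = complex_of_real (t $ i) *
            (theta i (\<lambda>s. theta_sum F s + \<alpha> * F s) t
             + \<beta> i * (theta_sum F t + \<alpha> * F t)))"

end

theory Submission
  imports Defs
begin


definition pdiff :: "'i::finite \<Rightarrow> (real^'i \<Rightarrow> complex) \<Rightarrow> real^'i \<Rightarrow> bool" where
  "pdiff i f p \<longleftrightarrow> (\<lambda>t. f (p + t *\<^sub>R axis i 1)) differentiable (at 0)"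

lemma pd_has: "pdiff i f p \<Longrightarrow> ((\<lambda>t. f (p + t *\<^sub>R axis i 1)) has_vector_derivative pd i f p) (at 0)"
  unfolding pdiff_def pd_def using vector_derivative_works by blast

lemma pd_eqI: "((\<lambda>t. f (p + t *\<^sub>R axis i 1)) has_vector_derivative D) (at 0) \<Longrightarrow> pd i f p = D"
  unfolding pd_def by (rule vector_derivative_at)

lemma pdiffI: "((\<lambda>t. f (p + t *\<^sub>R axis i 1)) has_vector_derivative D) (at 0) \<Longrightarrow> pdiff i f p"
  unfolding pdiff_def by (rule differentiableI_vector)

lemma pd_pdiffI: "((\<lambda>t. f (p + t *\<^sub>R axis i 1)) has_vector_derivative D) (at 0) \<Longrightarrow> pdiff i f p \<and> pd i f p = D"
  using pd_eqI pdiffI by blast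

lemma line_chain:
  fixes f :: "real^'i::finite \<Rightarrow> complex"
  assumes "pdiff i f q" "q = p + (w * s) *\<^sub>R axis i 1"
  shows "((\<lambda>t. f (p + (w * t) *\<^sub>R axis i 1)) has_vector_derivative (of_real w * pd i f q)) (at s)"
proof -
  have g: "((\<lambda>t. w * (t - s)) has_vector_derivative w) (at s)"
    by (auto intro!: derivative_eq_intros simp: has_real_derivative_iff_has_vector_derivative[symmetric])
  have F: "((\<lambda>t. f (q + t *\<^sub>R axis i 1)) has_vector_derivative pd i f q) (at ((\<lambda>t. w * (t - s)) s))"
    using pd_has[OF assms(1)] by simp
  have "(((\<lambda>t. f (q + t *\<^sub>R axis i 1)) \<circ> (\<lambda>t. w * (t - s))) has_vector_derivative (w *\<^sub>R pd i f q)) (at s)"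
    by (rule vector_diff_chain_at[OF g F])
  moreover have "((\<lambda>t. f (q + t *\<^sub>R axis i 1)) \<circ> (\<lambda>t. w * (t - s))) = (\<lambda>t. f (p + (w * t) *\<^sub>R axis i 1))"
    using assms(2) by (auto simp: fun_eq_iff algebra_simps scaleR_diff_left)
  ultimately show ?thesis by (simp add: scaleR_conv_of_real)
qed

lemma pd_local:
  fixes f g :: "real^'i::finite \<Rightarrow> complex"
  assumes "open S" "p \<in> S" "\<And>q. q \<in> S \<Longrightarrow> f q = g q"
  shows "pd i f p = pd i g p \<and> (pdiff i f p \<longleftrightarrow> pdiff i g p)"
proof -
  have op: "open ((\<lambda>t::real. p + t *\<^sub>R axis i 1) -` S)"
    by (rule continuous_open_vimage[OF assms(1)]) (intro continuous_intros)
  have ev: "eventually (\<lambda>t. f (p + t *\<^sub>R axis i 1) = g (p + t *\<^sub>R axis i 1)) (nhds 0)"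
  proof -
    have "eventually (\<lambda>t. t \<in> (\<lambda>t::real. p + t *\<^sub>R axis i 1) -` S) (nhds 0)"
      by (rule eventually_nhds_in_open[OF op]) (use assms(2) in simp)
    thus ?thesis by eventually_elim (use assms(3) in auto)
  qed
  have eq: "\<And>D. ((\<lambda>t. f (p + t *\<^sub>R axis i 1)) has_vector_derivative D) (at 0) = ((\<lambda>t. g (p + t *\<^sub>R axis i 1)) has_vector_derivative D) (at 0)"
    by (rule has_vector_derivative_cong_ev) (use ev assms in \<open>auto elim: eventually_mono\<close>)
  have 1: "pd i f p = pd i g p" unfolding pd_def vector_derivative_def using eq by simp
  have 2: "pdiff i f p \<longleftrightarrow> pdiff i g p" unfolding pdiff_def
    using eq vector_derivative_works differentiableI_vector by metis
  show ?thesis using 1 2 by blast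
qed

lemma pd_add:
  assumes "pdiff i f p" "pdiff i g p"
  shows "pdiff i (\<lambda>q. f q + g q) p \<and> pd i (\<lambda>q. f q + g q) p = pd i f p + pd i g p"
  by (rule pd_pdiffI, rule has_vector_derivative_add[OF pd_has[OF assms(1)] pd_has[OF assms(2)]])

lemma pd_diff:
  assumes "pdiff i f p" "pdiff i g p"
  shows "pdiff i (\<lambda>q. f q - g q) p \<and> pd i (\<lambda>q. f q - g q) p = pd i f p - pd i g p"
  by (rule pd_pdiffI, rule has_vector_derivative_diff[OF pd_has[OF assms(1)] pd_has[OF assms(2)]])

lemma pd_mult:
  assumes "pdiff i f p" "pdiff i g p"
  shows "pdiff i (\<lambda>q. f q * g q) p \<and> pd i (\<lambda>q. f q * g q) p = f p * pd i g p + pd i f p * g p"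
  using pd_pdiffI[OF has_vector_derivative_mult[OF pd_has[OF assms(1)] pd_has[OF assms(2)]]] by simp

lemma pd_const: "pdiff i (\<lambda>q. c) p \<and> pd i (\<lambda>q. c) p = 0"
  by (rule pd_pdiffI) simp

lemma pd_cmult:
  assumes "pdiff i f p"
  shows "pdiff i (\<lambda>q. c * f q) p \<and> pd i (\<lambda>q. c * f q) p = c * pd i f p"
  using pd_mult[OF conjunct1[OF pd_const] assms, of c] pd_const[of i c p] by simp

lemma pd_sum:
  assumes "\<And>a. a \<in> A \<Longrightarrow> pdiff i (F a) p"
  shows "pdiff i (\<lambda>q. \<Sum>a\<in>A. F a q) p \<and> pd i (\<lambda>q. \<Sum>a\<in>A. F a q) p = (\<Sum>a\<in>A. pd i (F a) p)"
  by (rule pd_pdiffI, rule has_vector_derivative_sum) (use pd_has assms in blast)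

lemma pd_coordfun:
  fixes p :: "real^'i::finite"
  assumes "(g has_real_derivative g') (at (p$j))"
  shows "pdiff i (\<lambda>q. complex_of_real (g (q$j))) p \<and>
         pd i (\<lambda>q. complex_of_real (g (q$j))) p = (if i = j then of_real g' else 0)"
proof (cases "i = j")
  case True
  have "((\<lambda>t. g (p$j + t)) has_real_derivative g') (at 0)"
    using DERIV_chain2[OF _ DERIV_ident[THEN DERIV_add[OF DERIV_const]], of g g' "p$j" 0] assms by simp
  hence "((\<lambda>t. complex_of_real (g (p$j + t))) has_vector_derivative of_real g') (at 0)"
    by (rule has_vector_derivative_of_real)
  thus ?thesis using True by (intro pd_pdiffI) (simp add: axis_def)
next
  case False
  thus ?thesis by (intro pd_pdiffI) (simp add: axis_def)
qed

lemma pd_coord: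
  fixes p :: "real^'i::finite"
  shows "pdiff i (\<lambda>q. complex_of_real (q$j)) p \<and> pd i (\<lambda>q. complex_of_real (q$j)) p = (if i = j then 1 else 0)"
  using pd_coordfun[of "\<lambda>x. x" 1 p j i] by simp

lemma theta_pdiff:
  assumes "pdiff j (pd i f) p"
  shows "pdiff j (theta i f) p"
  unfolding theta_def using pd_mult[OF conjunct1[OF pd_coord] assms] by blast

lemma theta_theta:
  assumes "pdiff j (pd i f) p"
  shows "theta j (theta i f) p = of_real (p$j) * ((if j = i then pd i f p else 0) + of_real (p$i) * pd j (pd i f) p)"
  unfolding theta_def[of i f] using pd_mult[OF conjunct1[OF pd_coord] assms, of i] pd_coord[of j i p]
  by (simp add: theta_def algebra_simps)

lemma theta_add:
  assumes "pdiff i f p" "pdiff i g p"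
  shows "theta i (\<lambda>q. f q + g q) p = theta i f p + theta i g p"
  using pd_add[OF assms] by (simp add: theta_def algebra_simps)

lemma theta_mult:
  assumes "pdiff i f p" "pdiff i g p"
  shows "theta i (\<lambda>q. f q * g q) p = f p * theta i g p + theta i f p * g p"
  using pd_mult[OF assms] by (simp add: theta_def algebra_simps)

lemma theta_cmult:
  assumes "pdiff i f p"
  shows "theta i (\<lambda>q. c * f q) p = c * theta i f p"
  using pd_cmult[OF assms] by (simp add: theta_def algebra_simps)

lemma theta_sum:
  assumes "\<And>a. a \<in> A \<Longrightarrow> pdiff i (F a) p"
  shows "theta i (\<lambda>q. \<Sum>a\<in>A. F a q) p = (\<Sum>a\<in>A. theta i (F a) p)"
proof -
  have "pd i (\<lambda>q. \<Sum>a\<in>A. F a q) p = (\<Sum>a\<in>A. pd i (F a) p)" using pd_sum[of A i F p] assms by blast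
  thus ?thesis by (simp add: theta_def sum_distrib_left)
qed

lemma theta_local:
  assumes "open S" "p \<in> S" "\<And>q. q \<in> S \<Longrightarrow> f q = g q"
  shows "theta i f p = theta i g p"
  using pd_local[OF assms] by (simp add: theta_def)

lemma seg_bound:
  fixes g g' :: "real \<Rightarrow> complex"
  assumes h: "0 < h" and der: "\<And>t. t \<in> {0..h} \<Longrightarrow> (g has_vector_derivative g' t) (at t)"
    and bnd: "\<And>t. t \<in> {0..h} \<Longrightarrow> norm (g' t - D) \<le> e"
  shows "norm (g h - g 0 - h *\<^sub>R D) \<le> 3 * e * h"
proof -
  have e0: "0 \<le> e" using bnd[of 0] h by (auto intro: order_trans[OF norm_ge_zero])
  have B: "\<And>t. t \<in> {0..h} \<Longrightarrow> norm (g' t - g' 0) \<le> 2 * e"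
  proof -
    fix t assume t: "t \<in> {0..h}"
    have "norm (g' t - g' 0) \<le> norm (g' t - D) + norm (g' 0 - D)"
      using norm_triangle_ineq4[of "g' t - D" "g' 0 - D"] by simp
    thus "norm (g' t - g' 0) \<le> 2 * e" using bnd[OF t] bnd[of 0] h by auto
  qed
  have "norm (g h - g 0 - (h - 0) *\<^sub>R g' 0) \<le> norm (h - 0) * (2 * e)"
  proof (rule vector_differentiable_bound_linearization[where S="{0..h}" and f=g and f'=g' and a=0 and b=h and B="2*e"])
    show "\<And>x. x \<in> {0..h} \<Longrightarrow> (g has_vector_derivative g' x) (at x within {0..h})"
      using der by (blast intro: has_vector_derivative_at_within)
    show "closed_segment 0 h \<subseteq> {0..h}" using h by (simp add: closed_segment_eq_real_ivl)
    show "\<And>x. x \<in> {0..h} \<Longrightarrow> norm (g' x - g' 0) \<le> 2 * e" by (rule B)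
    show "0 \<in> {0..h}" using h by simp
  qed
  hence 1: "norm (g h - g 0 - h *\<^sub>R g' 0) \<le> h * (2 * e)" using h by simp
  have 2: "norm (h *\<^sub>R g' 0 - h *\<^sub>R D) \<le> h * e"
    using bnd[of 0] h by (simp add: scaleR_diff_right[symmetric])
  have "norm (g h - g 0 - h *\<^sub>R D) \<le> norm (g h - g 0 - h *\<^sub>R g' 0) + norm (h *\<^sub>R g' 0 - h *\<^sub>R D)"
  proof -
    have "g h - g 0 - h *\<^sub>R D = (g h - g 0 - h *\<^sub>R g' 0) + (h *\<^sub>R g' 0 - h *\<^sub>R D)" by simp
    thus ?thesis using norm_triangle_ineq[of "g h - g 0 - h *\<^sub>R g' 0" "h *\<^sub>R g' 0 - h *\<^sub>R D"] by metis
  qed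
  moreover have "h * (2 * e) + h * e = 3 * e * h" by (simp add: algebra_simps)
  ultimately show ?thesis using 1 2 by linarith
qed

lemma schwarz_half:
  fixes f :: "real^'i::finite \<Rightarrow> complex"
  assumes r: "0 < h" "2 * h < r"
    and d: "\<And>q. q \<in> ball p r \<Longrightarrow> pdiff i f q \<and> pdiff j (pd i f) q"
    and bnd: "\<And>q. q \<in> ball p r \<Longrightarrow> norm (pd j (pd i f) q - D) \<le> e"
  shows "norm (f (p + h *\<^sub>R axis i 1 + h *\<^sub>R axis j 1) - f (p + h *\<^sub>R axis j 1)
               - f (p + h *\<^sub>R axis i 1) + f p - (h * h) *\<^sub>R D) \<le> 9 * e * h * h"
proof -
  let ?e = "axis i 1 :: real^'i" and ?d = "axis j 1 :: real^'i"
  have inb: "\<And>s t. s \<in> {0..h} \<Longrightarrow> t \<in> {0..h} \<Longrightarrow> p + s *\<^sub>R ?e + t *\<^sub>R ?d \<in> ball p r"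
  proof -
    fix s t :: real assume st: "s \<in> {0..h}" "t \<in> {0..h}"
    have "norm (s *\<^sub>R ?e + t *\<^sub>R ?d) \<le> norm (s *\<^sub>R ?e) + norm (t *\<^sub>R ?d)" by (rule norm_triangle_ineq)
    also have "\<dots> = \<bar>s\<bar> + \<bar>t\<bar>" by simp
    also have "\<dots> \<le> 2 * h" using st by simp
    moreover have "dist p (p + s *\<^sub>R ?e + t *\<^sub>R ?d) = norm (s *\<^sub>R ?e + t *\<^sub>R ?d)"
      by (metis dist_0_norm dist_add_cancel add.right_neutral add.assoc)
    ultimately show "p + s *\<^sub>R ?e + t *\<^sub>R ?d \<in> ball p r" using r by simp
  qed
  define \<psi> where "\<psi> s = f ((p + h *\<^sub>R ?d) + s *\<^sub>R ?e) - f (p + s *\<^sub>R ?e)" for s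
  define \<psi>' where "\<psi>' s = pd i f (p + s *\<^sub>R ?e + h *\<^sub>R ?d) - pd i f (p + s *\<^sub>R ?e)" for s
  have der: "(\<psi> has_vector_derivative \<psi>' s) (at s)" if s: "s \<in> {0..h}" for s
  proof -
    have a: "((\<lambda>t. f ((p + h *\<^sub>R ?d) + (1 * t) *\<^sub>R ?e)) has_vector_derivative (of_real 1 * pd i f (p + s *\<^sub>R ?e + h *\<^sub>R ?d))) (at s)"
    proof (rule line_chain)
      show "pdiff i f (p + s *\<^sub>R ?e + h *\<^sub>R ?d)" using d inb[OF s, of h] r by auto
    qed (simp add: add_ac)
    have b: "((\<lambda>t. f (p + (1 * t) *\<^sub>R ?e)) has_vector_derivative (of_real 1 * pd i f (p + s *\<^sub>R ?e))) (at s)"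
    proof (rule line_chain)
      show "pdiff i f (p + s *\<^sub>R ?e)" using d inb[OF s, of 0] r by auto
    qed simp
    show ?thesis using has_vector_derivative_diff[OF a b] unfolding \<psi>_def[abs_def] \<psi>'_def
      by simp
  qed
  have bnd': "norm (\<psi>' s - h *\<^sub>R D) \<le> 3 * e * h" if s: "s \<in> {0..h}" for s
  proof -
    define g where "g t = pd i f (p + s *\<^sub>R ?e + t *\<^sub>R ?d)" for t
    have "norm (g h - g 0 - h *\<^sub>R D) \<le> 3 * e * h"
    proof (rule seg_bound[OF r(1)])
      fix t assume t: "t \<in> {0..h}"
      show "(g has_vector_derivative pd j (pd i f) (p + s *\<^sub>R ?e + t *\<^sub>R ?d)) (at t)"
      proof -
        have "pdiff j (pd i f) (p + s *\<^sub>R ?e + t *\<^sub>R ?d)" using d inb[OF s t] by blast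
        from line_chain[of j "pd i f" "p + s *\<^sub>R ?e + t *\<^sub>R ?d" "p + s *\<^sub>R ?e" 1 t, OF this]
        show ?thesis unfolding g_def by simp
      qed
      show "norm (pd j (pd i f) (p + s *\<^sub>R ?e + t *\<^sub>R ?d) - D) \<le> e" using bnd inb[OF s t] by blast
    qed
    thus ?thesis by (simp add: g_def \<psi>'_def)
  qed
  have "norm (\<psi> h - \<psi> 0 - h *\<^sub>R (h *\<^sub>R D)) \<le> 3 * (3 * e * h) * h"
    by (rule seg_bound[OF r(1) der bnd'])
  note n = this
  have eq: "p + h *\<^sub>R ?d + h *\<^sub>R ?e = p + h *\<^sub>R ?e + h *\<^sub>R ?d"
    by (metis add.assoc add.commute)
  have xy: "\<psi> h - \<psi> 0 - h *\<^sub>R (h *\<^sub>R D) = f (p + h *\<^sub>R axis i 1 + h *\<^sub>R axis j 1) - f (p + h *\<^sub>R axis j 1)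
               - f (p + h *\<^sub>R axis i 1) + f p - (h * h) *\<^sub>R D"
    unfolding \<psi>_def eq by simp
  have "3 * (3 * e * h) * h = 9 * e * h * h" by simp
  thus ?thesis using n xy by metis
qed

lemma schwarz:
  fixes f :: "real^'i::finite \<Rightarrow> complex"
  assumes S: "open S" "p \<in> S"
    and d: "\<And>q. q \<in> S \<Longrightarrow> pdiff i f q \<and> pdiff j (pd i f) q \<and> pdiff j f q \<and> pdiff i (pd j f) q"
    and c1: "continuous_on S (pd j (pd i f))" and c2: "continuous_on S (pd i (pd j f))"
  shows "pd j (pd i f) p = pd i (pd j f) p"
proof -
  define D1 where "D1 = pd j (pd i f) p"
  define D2 where "D2 = pd i (pd j f) p"
  have key: "norm (D1 - D2) \<le> 18 * e" if e: "e > 0" for e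
  proof -
    obtain r0 where r0: "r0 > 0" "ball p r0 \<subseteq> S" using S open_contains_ball by blast
    obtain r1 where r1: "r1 > 0" "\<And>q. q \<in> S \<Longrightarrow> dist q p < r1 \<Longrightarrow> dist (pd j (pd i f) q) D1 < e"
      using c1 S(2) e unfolding continuous_on_iff D1_def by blast
    obtain r2 where r2: "r2 > 0" "\<And>q. q \<in> S \<Longrightarrow> dist q p < r2 \<Longrightarrow> dist (pd i (pd j f) q) D2 < e"
      using c2 S(2) e unfolding continuous_on_iff D2_def by blast
    define r where "r = min r0 (min r1 r2)"
    define h where "h = r / 3"
    have rp: "r > 0" "0 < h" "2 * h < r" using r0 r1 r2 by (auto simp: r_def h_def)
    have inS: "q \<in> S" "dist q p < r1" "dist q p < r2" if "q \<in> ball p r" for q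
      using that r0 by (auto simp: r_def dist_commute)
    have h1: "norm (f (p + h *\<^sub>R axis i 1 + h *\<^sub>R axis j 1) - f (p + h *\<^sub>R axis j 1)
               - f (p + h *\<^sub>R axis i 1) + f p - (h * h) *\<^sub>R D1) \<le> 9 * e * h * h"
    proof (rule schwarz_half[OF rp(2,3)])
      fix q assume q: "q \<in> ball p r"
      show "pdiff i f q \<and> pdiff j (pd i f) q" using d inS[OF q] by blast
      show "norm (pd j (pd i f) q - D1) \<le> e" using r1(2)[OF inS(1,2)[OF q]] by (simp add: dist_norm)
    qed
    have h2: "norm (f (p + h *\<^sub>R axis j 1 + h *\<^sub>R axis i 1) - f (p + h *\<^sub>R axis i 1)
               - f (p + h *\<^sub>R axis j 1) + f p - (h * h) *\<^sub>R D2) \<le> 9 * e * h * h"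
    proof (rule schwarz_half[OF rp(2,3)])
      fix q assume q: "q \<in> ball p r"
      show "pdiff j f q \<and> pdiff i (pd j f) q" using d inS[OF q] by blast
      show "norm (pd i (pd j f) q - D2) \<le> e" using r2(2)[OF inS(1,3)[OF q]] by (simp add: dist_norm)
    qed
    have eq: "p + h *\<^sub>R axis j 1 + h *\<^sub>R axis i 1 = p + h *\<^sub>R axis i 1 + h *\<^sub>R axis j 1"
      by (metis add.assoc add.commute)
    define A where "A = f (p + h *\<^sub>R axis i 1 + h *\<^sub>R axis j 1) - f (p + h *\<^sub>R axis j 1)
               - f (p + h *\<^sub>R axis i 1) + f p"
    have a1: "norm (A - (h * h) *\<^sub>R D1) \<le> 9 * e * h * h" using h1 by (simp add: A_def)
    have a2: "norm (A - (h * h) *\<^sub>R D2) \<le> 9 * e * h * h" using h2 unfolding eq by (simp add: A_def algebra_simps)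
    have "(h * h) *\<^sub>R (D1 - D2) = (A - (h * h) *\<^sub>R D2) - (A - (h * h) *\<^sub>R D1)" by (simp add: algebra_simps)
    hence "norm ((h * h) *\<^sub>R (D1 - D2)) \<le> norm (A - (h * h) *\<^sub>R D2) + norm (A - (h * h) *\<^sub>R D1)"
      by (metis norm_triangle_ineq4)
    moreover have "norm ((h * h) *\<^sub>R (D1 - D2)) = (h * h) * norm (D1 - D2)" using rp by simp
    moreover have "9 * e * h * h + 9 * e * h * h = (h * h) * (18 * e)" by (simp add: algebra_simps)
    ultimately have "(h * h) * norm (D1 - D2) \<le> (h * h) * (18 * e)" using a1 a2 by linarith
    thus ?thesis using rp by (simp add: mult_le_cancel_left)
  qed
  have "D1 = D2"
  proof (rule ccontr)
    assume "D1 \<noteq> D2"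
    hence "norm (D1 - D2) > 0" by simp
    from key[of "norm (D1 - D2) / 36"] this show False by simp
  qed
  thus ?thesis by (simp add: D1_def D2_def)
qed




lemma card_opt: "CARD('a::finite option) = Suc CARD('a)"
proof -
  have "(UNIV :: 'a option set) = insert None (Some ` UNIV)" by (rule UNIV_option_conv)
  moreover have "card (insert None (Some ` (UNIV::'a set))) = Suc CARD('a)"
    by (subst card_insert_disjoint) (auto simp: card_image)
  ultimately show ?thesis by simp
qed

lemma sum_opt: "(\<Sum>j\<in>(UNIV::'a::finite option set). F j) = F None + (\<Sum>a\<in>UNIV. F (Some a))"
proof -
  have "(UNIV :: 'a option set) = insert None (Some ` UNIV)" by (rule UNIV_option_conv)
  hence "(\<Sum>j\<in>(UNIV::'a option set). F j) = (\<Sum>j\<in>insert None (Some ` UNIV). F j)" by simp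
  also have "\<dots> = F None + (\<Sum>j\<in>Some ` UNIV. F j)" by (subst sum.insert) auto
  also have "(\<Sum>j\<in>Some ` UNIV. F j) = (\<Sum>a\<in>UNIV. F (Some a))" by (subst sum.reindex) auto
  finally show ?thesis .
qed

definition iota :: "real \<Rightarrow> real^'m::finite \<Rightarrow> real^('m option)" where
  "iota w y = (\<chi> j. case j of Some a \<Rightarrow> w * y$a | None \<Rightarrow> w)"

lemma iota_Some[simp]: "iota w y $ Some a = w * y$a" and iota_None[simp]: "iota w y $ None = w"
  by (simp_all add: iota_def)

lemma ymap_nth[simp]: "ymap z $ a = z $ Some a / z $ None"
  by (simp add: ymap_def)

lemma ymap_iota[simp]: "w \<noteq> 0 \<Longrightarrow> ymap (iota w y) = y"
  by (simp add: vec_eq_iff)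

lemma iota_ymap: "z $ None \<noteq> 0 \<Longrightarrow> iota (z $ None) (ymap z) = z"
  unfolding vec_eq_iff by (intro allI, case_tac i) auto

lemma iota_line: "iota w (y + t *\<^sub>R axis i 1) = iota w y + (w * t) *\<^sub>R axis (Some i) 1"
  unfolding vec_eq_iff by (intro allI, case_tac ia) (auto simp: axis_def algebra_simps)

lemma continuous_iota: "continuous_on A (iota w)"
  unfolding iota_def
  apply (intro continuous_on_vec_lambda)
  subgoal for i by (cases i) (auto intro!: continuous_intros)
  done

lemma chain_iota:
  fixes f :: "real^'m::finite option \<Rightarrow> complex"
  assumes "pdiff (Some i) f (iota w y)"
  shows "pdiff i (\<lambda>y. f (iota w y)) y \<and> theta i (\<lambda>y. f (iota w y)) y = theta (Some i) f (iota w y)"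
proof -
  have "((\<lambda>t. f (iota w y + (w * t) *\<^sub>R axis (Some i) 1)) has_vector_derivative (of_real w * pd (Some i) f (iota w y))) (at 0)"
    by (rule line_chain[OF assms]) simp
  hence "((\<lambda>t. f (iota w (y + t *\<^sub>R axis i 1))) has_vector_derivative (of_real w * pd (Some i) f (iota w y))) (at 0)"
    by (simp add: iota_line)
  from pd_pdiffI[OF this] show ?thesis by (simp add: theta_def)
qed

lemma chain_refl:
  fixes f :: "real^'m::finite \<Rightarrow> complex"
  assumes "pdiff i f (1 - x)"
  shows "pdiff i (\<lambda>x. f (1 - x)) x \<and> pd i (\<lambda>x. f (1 - x)) x = - pd i f (1 - x)"
proof -
  have "((\<lambda>t. f ((1 - x) + (-1 * t) *\<^sub>R axis i 1)) has_vector_derivative (of_real (-1) * pd i f (1 - x))) (at 0)"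
    by (rule line_chain[OF assms]) simp
  hence "((\<lambda>t. f (1 - (x + t *\<^sub>R axis i 1))) has_vector_derivative (- pd i f (1 - x))) (at 0)"
    by (simp add: algebra_simps)
  from pd_pdiffI[OF this] show ?thesis by simp
qed

definition EE :: "complex \<Rightarrow> real^'m::finite \<Rightarrow> complex" where
  "EE c y = exp (c * of_real (\<Sum>a\<in>UNIV. ln (y$a)))"

lemma EE_theta:
  fixes y :: "real^'m::finite"
  assumes pos: "\<forall>a. 0 < y$a"
  shows "pdiff i (EE c) y \<and> theta i (EE c) y = c * EE c y"
proof -
  define L where "L t = (\<Sum>a\<in>UNIV. ln ((y + t *\<^sub>R axis i 1)$a))" for t
  have L: "(L has_real_derivative (1 / y$i)) (at 0)"
  proof -
    have "((\<lambda>t. \<Sum>a\<in>UNIV. ln (y$a + t * (if a = i then 1 else 0))) has_real_derivative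
          (\<Sum>a\<in>UNIV. (if a = i then 1 else 0) / y$a)) (at 0)"
      by (rule derivative_eq_intros refl | use pos in force)+
    moreover have "(\<Sum>a\<in>UNIV. (if a = i then 1 else 0) / y$a) = 1 / y$i"
      by (subst sum.cong[OF refl, of _ _ "\<lambda>a. if a = i then 1 / y$a else 0"]) auto
    ultimately show ?thesis unfolding L_def by (simp add: axis_def)
  qed
  have "((\<lambda>z. exp (c * z)) \<circ> (\<lambda>t. complex_of_real (L t)) has_vector_derivative
        (of_real (1 / y$i) * (c * exp (c * of_real (L 0))))) (at 0)"
    by (rule field_vector_diff_chain_at[OF has_vector_derivative_of_real[OF L]])
       (auto intro!: derivative_eq_intros)
  hence "((\<lambda>t. EE c (y + t *\<^sub>R axis i 1)) has_vector_derivative (of_real (1 / y$i) * (c * EE c y))) (at 0)"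
    by (simp add: EE_def L_def o_def)
  from pd_pdiffI[OF this] show ?thesis using pos[rule_format, of i]
    by (simp add: theta_def field_simps)
qed

lemma continuous_EE:
  assumes "\<forall>y\<in>A. \<forall>a. 0 < y$a"
  shows "continuous_on A (EE c :: real^'m::finite \<Rightarrow> complex)"
  unfolding EE_def using assms by (intro continuous_intros) (auto, metis less_irrefl)

definition LPt :: "complex \<Rightarrow> complex \<Rightarrow> complex \<Rightarrow> real^'m::{finite,linorder} \<Rightarrow> complex \<Rightarrow> ('m \<Rightarrow> complex) \<Rightarrow> ('m \<Rightarrow> 'm \<Rightarrow> complex) \<Rightarrow> bool" where
  "LPt k \<alpha> \<gamma> p F0 T1 T2 \<longleftrightarrow>
    (\<forall>i j. i < j \<longrightarrow> of_real (p$i) * (T2 i j + k * T1 j) = of_real (p$j) * (T2 j i + k * T1 i)) \<and>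
    (\<forall>i. (\<Sum>b\<in>UNIV. T2 i b) + (\<gamma> - 1) * T1 i =
          of_real (p$i) * ((\<Sum>b\<in>UNIV. T2 i b) + \<alpha> * T1 i + k * ((\<Sum>b\<in>UNIV. T1 b) + \<alpha> * F0)))"

lemma theta_comb:
  fixes F :: "real^'m::finite \<Rightarrow> complex"
  assumes "pdiff i F t" "\<And>j. pdiff i (theta j F) t"
  shows "theta i (\<lambda>s. theta_sum F s + c * F s) t = (\<Sum>b\<in>UNIV. theta i (theta b F) t) + c * theta i F t"
proof -
  have p1: "pdiff i (\<lambda>s. \<Sum>b\<in>UNIV. theta b F s) t" using pd_sum[of UNIV i "\<lambda>b. theta b F" t] assms(2) by blast
  have p2: "pdiff i (\<lambda>s. c * F s) t" using pd_cmult[OF assms(1)] by blast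
  have "theta i (\<lambda>s. theta_sum F s + c * F s) t = theta i (\<lambda>s. (\<Sum>b\<in>UNIV. theta b F s) + c * F s) t"
    by (simp add: theta_sum_def)
  also have "\<dots> = theta i (\<lambda>s. \<Sum>b\<in>UNIV. theta b F s) t + theta i (\<lambda>s. c * F s) t" by (rule theta_add[OF p1 p2])
  also have "\<dots> = (\<Sum>b\<in>UNIV. theta i (theta b F) t) + c * theta i F t"
    using theta_sum[of UNIV i "\<lambda>b. theta b F" t] assms theta_cmult[OF assms(1)] by simp
  finally show ?thesis .
qed

lemma laur_iff:
  fixes F :: "real^'m::{finite,linorder} \<Rightarrow> complex"
  assumes "\<And>t i. t \<in> V \<Longrightarrow> pdiff i F t" "\<And>t i j. t \<in> V \<Longrightarrow> pdiff i (theta j F) t"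
  shows "lauricella_ED \<alpha> (\<lambda>_. k) \<gamma> V F \<longleftrightarrow>
     (\<forall>t\<in>V. LPt k \<alpha> \<gamma> t (F t) (\<lambda>i. theta i F t) (\<lambda>i j. theta i (theta j F) t))"
proof -
  have eq: "theta i (\<lambda>s. theta_sum F s + c * F s) t = (\<Sum>b\<in>UNIV. theta i (theta b F) t) + c * theta i F t"
    if "t \<in> V" for t i c by (rule theta_comb) (use assms that in auto)
  have pt: "((\<forall>i j. i < j \<longrightarrow> of_real (t $ i) * (theta i (theta j F) t + k * theta j F t)
                = of_real (t $ j) * (theta j (theta i F) t + k * theta i F t)) \<and>
            (\<forall>i. theta i (\<lambda>s. theta_sum F s + (\<gamma> - 1) * F s) t = of_real (t $ i) *
              (theta i (\<lambda>s. theta_sum F s + \<alpha> * F s) t + k * (theta_sum F t + \<alpha> * F t))))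
        \<longleftrightarrow> LPt k \<alpha> \<gamma> t (F t) (\<lambda>i. theta i F t) (\<lambda>i j. theta i (theta j F) t)" if t: "t \<in> V" for t
    unfolding LPt_def eq[OF t] by (simp add: theta_sum_def algebra_simps)
  show ?thesis unfolding lauricella_ED_def using pt by blast
qed




lemma alg1:
  fixes E ph Aa Ab Bab Bba k cc ya yb Q :: complex
  assumes hQ: "Q * (ya - yb) = ya + yb" and sym: "Bba = Bab"
  shows "ya * (E * (cc * (cc * ph + Ab) + cc * Aa + Bab) + k * (E * (cc * ph + Ab)))
       - yb * (E * (cc * (cc * ph + Aa) + cc * Ab + Bba) + k * (E * (cc * ph + Aa)))
       = (ya - yb) * E * ((Bab - k / 2 * Q * (Aa - Ab) + (cc + k / 2) * (Aa + Ab)) + cc * (cc + k) * ph)"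
  using hQ sym by algebra

lemma alg2:
  fixes E ph Aa SA SB k cc ya Q m nu :: complex
  assumes hQ: "Q * (ya - 1) = ya + 1" and hnu: "nu = cc * (m + 1)"
  shows "E * (m * cc * cc * ph + cc * SA + m * cc * Aa + SB) + (- nu - k + 1 - 1) * (E * (cc * ph + Aa))
     - ya * (E * (m * cc * cc * ph + cc * SA + m * cc * Aa + SB) + (- nu) * (E * (cc * ph + Aa))
             + k * (E * (m * cc * ph + SA) + (- nu) * (E * ph)))
     = (ya - 1) * E * ((- SB - k / 2 * Q * (Aa - (- SA)) + (cc + k / 2) * (Aa + (- SA))) + cc * (cc + k) * ph)"
  using hQ hnu by algebra





definition R1 :: "complex \<Rightarrow> real^'m::finite \<Rightarrow> ('m \<Rightarrow> complex) \<Rightarrow> ('m \<Rightarrow> 'm \<Rightarrow> complex) \<Rightarrow> 'm \<Rightarrow> 'm \<Rightarrow> complex" where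
  "R1 k p d h i j = (of_real (p$i) - of_real (p$j)) * h i j + k * (d j - d i)"

definition R2 :: "complex \<Rightarrow> complex \<Rightarrow> complex \<Rightarrow> real^'m::finite \<Rightarrow> complex \<Rightarrow> ('m \<Rightarrow> complex) \<Rightarrow> ('m \<Rightarrow> 'm \<Rightarrow> complex) \<Rightarrow> 'm \<Rightarrow> complex" where
  "R2 k \<alpha> \<gamma> p F0 d h a = (\<Sum>b\<in>UNIV. of_real (p$b) * h a b) + \<gamma> * d a
     - of_real (p$a) * ((\<Sum>b\<in>UNIV. of_real (p$b) * h a b) + (\<alpha> + 1) * d a)
     - k * ((\<Sum>b\<in>UNIV. of_real (p$b) * d b) + \<alpha> * F0)"

lemma GP1:
  fixes p :: "real^'m::finite"
  assumes hsym: "\<And>i j. h i j = h j i" and ij: "i \<noteq> j"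
  shows "(of_real (p$i) * (of_real (p$i) * ((if i = j then d j else 0) + of_real (p$j) * h i j) + k * (of_real (p$j) * d j))
        = of_real (p$j) * (of_real (p$j) * ((if j = i then d i else 0) + of_real (p$i) * h j i) + k * (of_real (p$i) * d i)))
     \<longleftrightarrow> of_real (p$i) * of_real (p$j) * R1 k p d h i j = 0"
proof -
  have "of_real (p$i) * (of_real (p$i) * ((if i = j then d j else 0) + of_real (p$j) * h i j) + k * (of_real (p$j) * d j))
      - of_real (p$j) * (of_real (p$j) * ((if j = i then d i else 0) + of_real (p$i) * h j i) + k * (of_real (p$i) * d i))
      = of_real (p$i) * of_real (p$j) * R1 k p d h i j"
    using ij hsym[of i j] by (simp add: R1_def algebra_simps)
  thus ?thesis by (subst eq_iff_diff_eq_0) (rule arg_cong[where f="\<lambda>x. x = 0"])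
qed

lemma GP2:
  fixes p :: "real^'m::finite"
  shows "((\<Sum>b\<in>UNIV. of_real (p$a) * ((if a = b then d b else 0) + of_real (p$b) * h a b)) + (\<gamma> - 1) * (of_real (p$a) * d a)
      = of_real (p$a) * ((\<Sum>b\<in>UNIV. of_real (p$a) * ((if a = b then d b else 0) + of_real (p$b) * h a b))
          + \<alpha> * (of_real (p$a) * d a) + k * ((\<Sum>b\<in>UNIV. of_real (p$b) * d b) + \<alpha> * F0)))
      \<longleftrightarrow> of_real (p$a) * R2 k \<alpha> \<gamma> p F0 d h a = 0"
proof -
  have S: "(\<Sum>b\<in>UNIV. of_real (p$a) * ((if a = b then d b else 0) + of_real (p$b) * h a b))
      = of_real (p$a) * d a + of_real (p$a) * (\<Sum>b\<in>UNIV. of_real (p$b) * h a b)"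
  proof -
    have "(\<Sum>b\<in>UNIV. of_real (p$a) * ((if a = b then d b else 0) + of_real (p$b) * h a b))
       = (\<Sum>b\<in>UNIV. (if a = b then of_real (p$a) * d b else 0) + of_real (p$a) * (of_real (p$b) * h a b))"
      by (rule sum.cong) (auto simp: algebra_simps)
    also have "\<dots> = of_real (p$a) * d a + of_real (p$a) * (\<Sum>b\<in>UNIV. of_real (p$b) * h a b)"
      by (simp add: sum.distrib sum.delta sum_distrib_left)
    finally show ?thesis .
  qed
  have "((\<Sum>b\<in>UNIV. of_real (p$a) * ((if a = b then d b else 0) + of_real (p$b) * h a b)) + (\<gamma> - 1) * (of_real (p$a) * d a))
    - of_real (p$a) * ((\<Sum>b\<in>UNIV. of_real (p$a) * ((if a = b then d b else 0) + of_real (p$b) * h a b))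
        + \<alpha> * (of_real (p$a) * d a) + k * ((\<Sum>b\<in>UNIV. of_real (p$b) * d b) + \<alpha> * F0))
    = of_real (p$a) * R2 k \<alpha> \<gamma> p F0 d h a"
    unfolding S by (simp add: R2_def algebra_simps)
  thus ?thesis by (subst eq_iff_diff_eq_0) (rule arg_cong[where f="\<lambda>x. x = 0"])
qed

lemma GP:
  fixes p :: "real^'m::{finite,linorder}"
  assumes hsym: "\<And>i j. h i j = h j i"
  shows "LPt k \<alpha> \<gamma> p F0 (\<lambda>i. of_real (p$i) * d i)
           (\<lambda>i j. of_real (p$i) * ((if i = j then d j else 0) + of_real (p$j) * h i j))
     \<longleftrightarrow> (\<forall>i j. i < j \<longrightarrow> of_real (p$i) * of_real (p$j) * R1 k p d h i j = 0)
        \<and> (\<forall>a. of_real (p$a) * R2 k \<alpha> \<gamma> p F0 d h a = 0)"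
  unfolding LPt_def
  apply (rule conj_cong)
   apply (intro iff_allI)
   apply (rule imp_cong[OF refl])
   apply (rule GP1[OF hsym])
   apply (erule less_imp_neq)
  apply (intro iff_allI)
  apply (rule GP2)
  done

lemma R1_refl: "R1 k (1 - y) (\<lambda>i. - d i) h i j = - R1 k y d h i j"
  by (simp add: R1_def algebra_simps)

lemma R2_refl:
  fixes y :: "real^'m::finite"
  assumes "\<gamma>' = (of_nat CARD('m) + 1) * k" "\<alpha> = - \<nu>" "\<gamma> = - \<nu> - k + 1"
  shows "R2 k \<alpha> \<gamma>' (1 - y) F0 (\<lambda>i. - d i) h a = R2 k \<alpha> \<gamma> y F0 d h a + (\<Sum>b\<in>UNIV. R1 k y d h a b)"
proof -
  define Sh where "Sh = (\<Sum>b\<in>UNIV. h a b)"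
  define Syh where "Syh = (\<Sum>b\<in>UNIV. of_real (y$b) * h a b)"
  define Sd where "Sd = (\<Sum>b\<in>UNIV. d b)"
  define Syd where "Syd = (\<Sum>b\<in>UNIV. of_real (y$b) * d b)"
  have e1: "(\<Sum>b\<in>UNIV. of_real ((1 - y)$b) * h a b) = Sh - Syh"
    by (simp add: Sh_def Syh_def algebra_simps sum_subtractf)
  have e2: "(\<Sum>b\<in>UNIV. of_real ((1 - y)$b) * - d b) = Syd - Sd"
    by (simp add: Sd_def Syd_def algebra_simps sum_subtractf)
  have e3: "(\<Sum>b\<in>UNIV. R1 k y d h a b) = of_real (y$a) * Sh - Syh + k * Sd - of_nat CARD('m) * k * d a"
    by (simp add: R1_def Sh_def Syh_def Sd_def algebra_simps sum_subtractf sum.distrib sum_distrib_left sum_distrib_right)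
  show ?thesis unfolding R2_def e1 e2 e3 Syh_def[symmetric] Syd_def[symmetric] assms
    by (simp add: algebra_simps)
qed




locale LS =
  fixes k \<nu> :: complex
    and U :: "(real, 'm::{finite,linorder} option) vec set"
    and \<phi> :: "(real, 'm option) vec \<Rightarrow> complex"
    and u :: "(real, 'm) vec \<Rightarrow> complex"
  assumes U_open: "open U"
    and U_pos: "\<forall>z\<in>U. \<forall>i. 0 < z $ i"
    and \<phi>_smooth: "smooth_on U \<phi>"
    and euler: "\<forall>z\<in>U. theta_sum \<phi> z = 0"
    and repr: "\<forall>z\<in>U. \<phi> z =
        complex_of_real (\<Prod>a\<in>UNIV. ymap z $ a) powr (- \<nu> / of_nat CARD('m option)) * u (ymap z)"
begin

definition "cc = \<nu> / of_nat CARD('m option)"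

lemma sm_pdiff: "z \<in> U \<Longrightarrow> pdiff i (iter_pd is \<phi>) z"
  using \<phi>_smooth unfolding smooth_on_def pdiff_def by blast

lemma sm_cont: "continuous_on U (iter_pd is \<phi>)"
  using \<phi>_smooth unfolding smooth_on_def by blast

lemma pd1: "z \<in> U \<Longrightarrow> pdiff i \<phi> z" using sm_pdiff[of z i "[]"] by simp
lemma pd2: "z \<in> U \<Longrightarrow> pdiff j (pd i \<phi>) z" using sm_pdiff[of z j "[i]"] by simp
lemma cont0: "continuous_on U \<phi>" using sm_cont[of "[]"] by simp
lemma cont1: "continuous_on U (pd i \<phi>)" using sm_cont[of "[i]"] by simp
lemma cont2: "continuous_on U (pd j (pd i \<phi>))" using sm_cont[of "[j,i]"] by simp

lemma sym2: "z \<in> U \<Longrightarrow> pd j (pd i \<phi>) z = pd i (pd j \<phi>) z"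
proof (cases "i = j")
  case False
  assume z: "z \<in> U"
  show ?thesis by (rule schwarz[OF U_open z]) (auto intro: pd1 pd2 cont2)
qed simp

lemma th_pdiff: "z \<in> U \<Longrightarrow> pdiff j (theta i \<phi>) z"
  by (rule theta_pdiff[OF pd2])

lemma thth: "z \<in> U \<Longrightarrow> theta j (theta i \<phi>) z =
   of_real (z$j) * ((if j = i then pd i \<phi> z else 0) + of_real (z$i) * pd j (pd i \<phi>) z)"
  by (rule theta_theta[OF pd2])

lemma thth_sym: "z \<in> U \<Longrightarrow> theta j (theta i \<phi>) z = theta i (theta j \<phi>) z"
  by (simp add: thth sym2[of z i j] algebra_simps)

lemma cont_th: "continuous_on U (theta i \<phi>)"
  unfolding theta_def by (intro continuous_intros cont1)

lemma cont_thth: "continuous_on U (theta j (theta i \<phi>))"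
proof -
  have "continuous_on U (\<lambda>z. of_real (z$j) * ((if j = i then pd i \<phi> z else 0) + of_real (z$i) * pd j (pd i \<phi>) z))"
    by (cases "j = i") (auto intro!: continuous_intros cont1 cont2)
  thus ?thesis by (rule continuous_on_eq) (simp add: thth)
qed

lemma zpos: "z \<in> U \<Longrightarrow> 0 < z $ i" using U_pos by blast

lemma u_repr:
  assumes z: "z \<in> U"
  shows "u (ymap z) = EE cc (ymap z) * \<phi> z"
proof -
  have ypos: "\<And>a. 0 < ymap z $ a" using zpos[OF z] by simp
  define P where "P = (\<Prod>a\<in>UNIV. ymap z $ a)"
  have P: "P > 0" unfolding P_def using ypos by (simp add: prod_pos)
  have lnP: "ln P = (\<Sum>a\<in>UNIV. ln (ymap z $ a))" unfolding P_def
    using ln_prod[of UNIV "\<lambda>a. ymap z $ a"] ypos by (metis finite less_irrefl)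
  have "complex_of_real P powr (- \<nu> / of_nat CARD('m option)) = exp (- cc * of_real (ln P))"
    using P by (simp add: powr_def Ln_of_real cc_def)
  hence "\<phi> z = exp (- cc * of_real (ln P)) * u (ymap z)" using repr z by (simp add: P_def)
  hence "EE cc (ymap z) * \<phi> z = exp (cc * of_real (ln P)) * exp (- cc * of_real (ln P)) * u (ymap z)"
    by (simp add: EE_def lnP)
  also have "\<dots> = u (ymap z)" by (simp add: exp_minus[symmetric] exp_add[symmetric])
  finally show ?thesis by simp
qed

lemma u_jets:
  assumes z: "z \<in> U"
  shows "pdiff i u (ymap z)"
    "theta i u (ymap z) = EE cc (ymap z) * (cc * \<phi> z + theta (Some i) \<phi> z)"
    "pdiff j (theta i u) (ymap z)"
    "theta j (theta i u) (ymap z) = EE cc (ymap z) * (cc * (cc * \<phi> z + theta (Some i) \<phi> z)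
        + cc * theta (Some j) \<phi> z + theta (Some j) (theta (Some i) \<phi>) z)"
    "pdiff j (pd i u) (ymap z)"
proof -
  define w where "w = z $ None"
  define y where "y = ymap z"
  have w: "w > 0" using zpos[OF z] by (simp add: w_def)
  define N where "N = iota w -` U"
  have Nopen: "open N" unfolding N_def
    by (rule continuous_open_vimage[OF U_open])
       (use continuous_iota[of UNIV w] in \<open>auto simp: continuous_on_eq_continuous_at\<close>)
  have yN: "y \<in> N" using iota_ymap[of z] w z by (simp add: N_def y_def w_def)
  have iy: "iota w y = z" using iota_ymap[of z] w by (simp add: y_def w_def)
  have inU: "iota w y' \<in> U" if "y' \<in> N" for y' using that by (simp add: N_def)
  have ypos: "\<forall>a. 0 < y' $ a" if "y' \<in> N" for y'
  proof
    fix a show "0 < y' $ a" using zpos[OF inU[OF that], of "Some a"] w by (simp add: zero_less_mult_iff)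
  qed
  define Ut where "Ut y' = EE cc y' * \<phi> (iota w y')" for y'
  have uUt: "u y' = Ut y'" if "y' \<in> N" for y'
    using u_repr[OF inU[OF that]] w by (simp add: Ut_def)
  define G where "G i' y' = EE cc y' * (cc * \<phi> (iota w y') + theta (Some i') \<phi> (iota w y'))" for i' y'
  have Ut1: "pdiff i' Ut y' \<and> theta i' Ut y' = G i' y'" if y': "y' \<in> N" for i' y'
  proof -
    note ch = chain_iota[OF pd1[OF inU[OF y']], of i']
    note e = EE_theta[OF ypos[OF y'], of i' cc]
    have "pdiff i' Ut y'" unfolding Ut_def using pd_mult[OF conjunct1[OF e] conjunct1[OF ch]] by blast
    moreover have "theta i' Ut y' = G i' y'"
      unfolding Ut_def G_def using theta_mult[OF conjunct1[OF e] conjunct1[OF ch]] e ch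
      by (simp add: algebra_simps)
    ultimately show ?thesis by blast
  qed
  have u1: "pdiff i' u y' \<and> theta i' u y' = G i' y'" if y': "y' \<in> N" for i' y'
    using pd_local[OF Nopen y' uUt, where i=i'] theta_local[OF Nopen y' uUt, where i=i'] Ut1[OF y', of i'] by simp
  have G1: "pdiff j' (G i') y \<and> theta j' (G i') y = EE cc y * (cc * theta (Some j') \<phi> z + theta (Some j') (theta (Some i') \<phi>) z)
      + cc * EE cc y * (cc * \<phi> z + theta (Some i') \<phi> z)" for i' j'
  proof -
    note c1 = chain_iota[of j' \<phi> w y, unfolded iy, OF pd1[OF z]]
    note c2 = chain_iota[of j' "theta (Some i') \<phi>" w y, unfolded iy, OF th_pdiff[OF z]]
    note e = EE_theta[OF ypos[OF yN], of j' cc]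
    have p1: "pdiff j' (\<lambda>y'. cc * \<phi> (iota w y')) y" using pd_cmult[OF conjunct1[OF c1]] by blast
    have pH: "pdiff j' (\<lambda>y'. cc * \<phi> (iota w y') + theta (Some i') \<phi> (iota w y')) y"
      using pd_add[OF p1 conjunct1[OF c2]] by blast
    have tH: "theta j' (\<lambda>y'. cc * \<phi> (iota w y') + theta (Some i') \<phi> (iota w y')) y
        = cc * theta (Some j') \<phi> z + theta (Some j') (theta (Some i') \<phi>) z"
      using theta_add[OF p1 conjunct1[OF c2]] theta_cmult[OF conjunct1[OF c1], of cc] c1 c2 by simp
    have "pdiff j' (G i') y" unfolding G_def using pd_mult[OF conjunct1[OF e] pH] by blast
    moreover have "theta j' (G i') y = EE cc y * (cc * theta (Some j') \<phi> z + theta (Some j') (theta (Some i') \<phi>) z)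
      + cc * EE cc y * (cc * \<phi> z + theta (Some i') \<phi> z)"
      unfolding G_def[abs_def] using theta_mult[OF conjunct1[OF e] pH] tH e by (simp add: iy)
    ultimately show ?thesis by blast
  qed
  have eqG: "\<And>q. q \<in> N \<Longrightarrow> theta i u q = G i q" using u1 by blast
  show "pdiff i u (ymap z)" using u1[OF yN] by (simp add: y_def)
  show "theta i u (ymap z) = EE cc (ymap z) * (cc * \<phi> z + theta (Some i) \<phi> z)"
    using u1[OF yN, of i] by (simp add: G_def iy flip: y_def)
  show "pdiff j (theta i u) (ymap z)"
    using pd_local[OF Nopen yN eqG, where i=j] G1[of j i] by (simp add: y_def)
  show "theta j (theta i u) (ymap z) = EE cc (ymap z) * (cc * (cc * \<phi> z + theta (Some i) \<phi> z)
        + cc * theta (Some j) \<phi> z + theta (Some j) (theta (Some i) \<phi>) z)"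
    using theta_local[OF Nopen yN eqG, where i=j] G1[of j i] by (simp add: algebra_simps flip: y_def)
  have eqP: "\<And>q. q \<in> N \<Longrightarrow> pd i u q = G i q * of_real (1 / q $ i)"
  proof -
    fix q assume q: "q \<in> N"
    have "theta i u q = of_real (q $ i) * pd i u q" by (simp add: theta_def)
    moreover have "q $ i \<noteq> 0" using ypos[OF q] by (metis less_irrefl)
    ultimately show "pd i u q = G i q * of_real (1 / q $ i)" using u1[OF q, of i]
      by (simp add: field_simps)
  qed
  have "pdiff j (\<lambda>q. complex_of_real (1 / q $ i)) y"
  proof -
    have "((\<lambda>x. 1 / x) has_real_derivative (- 1 / (y$i)^2)) (at (y$i))"
    proof -
      have "0 < y $ i" using ypos[OF yN] by blast
      thus ?thesis by (auto intro!: derivative_eq_intros simp: power2_eq_square field_simps)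
    qed
    from pd_coordfun[OF this, of j] show ?thesis by blast
  qed
  hence "pdiff j (\<lambda>q. G i q * complex_of_real (1 / q $ i)) y" using pd_mult G1 by blast
  thus "pdiff j (pd i u) (ymap z)" using pd_local[OF Nopen yN eqP, where i=j] by (simp add: y_def)
qed

definition "T0 z = EE cc (ymap z) * \<phi> z"
definition "T1 z i = EE cc (ymap z) * (cc * \<phi> z + theta (Some i) \<phi> z)"
definition "T2 z i j = EE cc (ymap z) * (cc * (cc * \<phi> z + theta (Some j) \<phi> z)
        + cc * theta (Some i) \<phi> z + theta (Some i) (theta (Some j) \<phi>) z)"

lemma Ly_iff:
  "lauricella_ED \<alpha> (\<lambda>_. k) \<gamma> (ymap ` U) u \<longleftrightarrow> (\<forall>z\<in>U. LPt k \<alpha> \<gamma> (ymap z) (T0 z) (T1 z) (T2 z))"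
proof -
  have "lauricella_ED \<alpha> (\<lambda>_. k) \<gamma> (ymap ` U) u \<longleftrightarrow>
     (\<forall>t\<in>ymap ` U. LPt k \<alpha> \<gamma> t (u t) (\<lambda>i. theta i u t) (\<lambda>i j. theta i (theta j u) t))"
    by (rule laur_iff) (auto intro: u_jets)
  also have "\<dots> \<longleftrightarrow> (\<forall>z\<in>U. LPt k \<alpha> \<gamma> (ymap z) (T0 z) (T1 z) (T2 z))"
  proof -
    have "(u (ymap z)) = T0 z" "(\<lambda>i. theta i u (ymap z)) = T1 z" "(\<lambda>i j. theta i (theta j u) (ymap z)) = T2 z"
      if "z \<in> U" for z
      using u_repr[OF that] u_jets(2)[OF that] u_jets(4)[OF that]
      by (auto simp: T0_def T1_def T2_def fun_eq_iff)
    thus ?thesis by auto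
  qed
  finally show ?thesis .
qed

lemma N_props:
  assumes z: "z \<in> U"
  shows "open (iota (z$None) -` U)" "ymap z \<in> iota (z$None) -` U" "iota (z$None) -` U \<subseteq> ymap ` U"
proof -
  have w: "z$None > 0" using zpos[OF z] by simp
  show "open (iota (z$None) -` U)"
    by (rule continuous_open_vimage[OF U_open])
       (use continuous_iota[of UNIV "z$None"] in \<open>auto simp: continuous_on_eq_continuous_at\<close>)
  show "ymap z \<in> iota (z$None) -` U" using iota_ymap[of z] w z by simp
  show "iota (z$None) -` U \<subseteq> ymap ` U"
  proof
    fix y' assume "y' \<in> iota (z$None) -` U"
    hence "iota (z$None) y' \<in> U" by simp
    moreover have "ymap (iota (z$None) y') = y'" using w by simp
    ultimately show "y' \<in> ymap ` U" by (metis image_eqI)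
  qed
qed

lemma V_open: "open (ymap ` U)"
proof (rule openI)
  fix y assume "y \<in> ymap ` U"
  then obtain z where z: "z \<in> U" "y = ymap z" by blast
  show "\<exists>e>0. ball y e \<subseteq> ymap ` U"
  proof -
    obtain e where "e > 0" "ball y e \<subseteq> iota (z$None) -` U"
      using N_props[OF z(1)] z(2) open_contains_ball by blast
    thus ?thesis using N_props(3)[OF z(1)] by blast
  qed
qed

lemma ymap_pos: "z \<in> U \<Longrightarrow> 0 < ymap z $ a"
  using zpos[of z "Some a"] zpos[of z None] by simp

lemma ymap_nz: "z \<in> U \<Longrightarrow> ymap z $ a \<noteq> 0"
  using ymap_pos[of z a] by (metis less_irrefl)

lemma ymap_nz': "z \<in> U \<Longrightarrow> complex_of_real (ymap z $ a) \<noteq> 0"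
  using ymap_nz[of z a] by (simp del: ymap_nth)

definition "dz z i = T1 z i / of_real (ymap z $ i)"
definition "hz z i j = (T2 z i j / of_real (ymap z $ i) - (if i = j then dz z j else 0)) / of_real (ymap z $ j)"

lemma T1_dz: "z \<in> U \<Longrightarrow> T1 z i = of_real (ymap z $ i) * dz z i"
  using ymap_nz'[of z i] by (simp add: dz_def del: ymap_nth)

lemma T2_hz: "z \<in> U \<Longrightarrow> T2 z i j = of_real (ymap z $ i) * ((if i = j then dz z j else 0) + of_real (ymap z $ j) * hz z i j)"
  using ymap_nz'[of z i] ymap_nz'[of z j] by (simp add: hz_def field_simps del: ymap_nth)

lemma T2_sym: "z \<in> U \<Longrightarrow> T2 z i j = T2 z j i"
  unfolding T2_def using thth_sym[of z "Some i" "Some j"] by (simp add: algebra_simps)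

lemma hz_sym: "z \<in> U \<Longrightarrow> hz z i j = hz z j i"
  unfolding hz_def using T2_sym[of z i j] ymap_nz'[of z i] ymap_nz'[of z j]
  by (cases "i = j") (simp_all add: field_simps del: ymap_nth)

lemma pd_u1: "z \<in> U \<Longrightarrow> pd i u (ymap z) = dz z i"
proof -
  assume z: "z \<in> U"
  have "theta i u (ymap z) = of_real (ymap z $ i) * pd i u (ymap z)" by (simp add: theta_def del: ymap_nth)
  thus ?thesis using u_jets(2)[OF z, of i] ymap_nz'[OF z, of i]
    by (simp add: dz_def T1_def field_simps del: ymap_nth)
qed

lemma pd_u2: "z \<in> U \<Longrightarrow> pd i (pd j u) (ymap z) = hz z i j"
proof -
  assume z: "z \<in> U"
  have "T2 z i j = theta i (theta j u) (ymap z)"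
    using u_jets(4)[OF z, where i=j and j=i] by (simp add: T2_def)
  also have "\<dots> = of_real (ymap z $ i) * ((if i = j then pd j u (ymap z) else 0) + of_real (ymap z $ j) * pd i (pd j u) (ymap z))"
    by (rule theta_theta[OF u_jets(5)[OF z]])
  finally have "T2 z i j = of_real (ymap z $ i) * ((if i = j then dz z j else 0) + of_real (ymap z $ j) * pd i (pd j u) (ymap z))"
    using pd_u1[OF z] by simp
  thus ?thesis using ymap_nz'[OF z, of i] ymap_nz'[OF z, of j] by (simp add: hz_def field_simps del: ymap_nth)
qed

lemma Lx_iff:
  "lauricella_ED \<alpha> (\<lambda>_. k) \<gamma> ((\<lambda>y. 1 - y) ` ymap ` U) (\<lambda>x. u (1 - x)) \<longleftrightarrow>
   (\<forall>z\<in>U. LPt k \<alpha> \<gamma> (1 - ymap z) (T0 z) (\<lambda>i. of_real ((1 - ymap z)$i) * (- dz z i))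
       (\<lambda>i j. of_real ((1 - ymap z)$i) * ((if i = j then - dz z j else 0) + of_real ((1 - ymap z)$j) * hz z i j)))" (is "?L \<longleftrightarrow> ?R")
proof -
  define W where "W = (\<lambda>x. 1 - x) -` (ymap ` U)"
  have Wopen: "open W" unfolding W_def
    by (rule continuous_open_vimage[OF V_open]) (auto intro!: continuous_intros)
  have pu: "pdiff i u y'" if "y' \<in> ymap ` U" for i y' using that u_jets(1) by blast
  have pdu: "pdiff j (pd i u) y'" if "y' \<in> ymap ` U" for i j y' using that u_jets(5) by blast
  have ut1: "pdiff i (\<lambda>x. u (1 - x)) x \<and> pd i (\<lambda>x. u (1 - x)) x = - pd i u (1 - x)" if "x \<in> W" for i x
    by (rule chain_refl) (use pu that W_def in auto)
  have ut2: "pdiff j (pd i (\<lambda>x. u (1 - x))) x \<and> pd j (pd i (\<lambda>x. u (1 - x))) x = pd j (pd i u) (1 - x)" if x: "x \<in> W" for i j x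
  proof -
    have eq: "\<And>q. q \<in> W \<Longrightarrow> pd i (\<lambda>x. u (1 - x)) q = (- 1) * pd i u (1 - q)" using ut1 by simp
    have c: "pdiff j (\<lambda>x. pd i u (1 - x)) x \<and> pd j (\<lambda>x. pd i u (1 - x)) x = - pd j (pd i u) (1 - x)"
      by (rule chain_refl) (use pdu x W_def in auto)
    have "pdiff j (\<lambda>q. (- 1) * pd i u (1 - q)) x \<and> pd j (\<lambda>q. (- 1) * pd i u (1 - q)) x = pd j (pd i u) (1 - x)"
      using pd_cmult[OF conjunct1[OF c], of "-1"] c by simp
    thus ?thesis using pd_local[OF Wopen x eq, where i=j] by simp
  qed
  have img: "(\<lambda>y. 1 - y) ` ymap ` U \<subseteq> W" unfolding W_def by auto
  have "lauricella_ED \<alpha> (\<lambda>_. k) \<gamma> ((\<lambda>y. 1 - y) ` ymap ` U) (\<lambda>x. u (1 - x)) \<longleftrightarrow>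
     (\<forall>t\<in>(\<lambda>y. 1 - y) ` ymap ` U. LPt k \<alpha> \<gamma> t (u (1 - t)) (\<lambda>i. theta i (\<lambda>x. u (1 - x)) t)
        (\<lambda>i j. theta i (theta j (\<lambda>x. u (1 - x))) t))"
    apply (rule laur_iff)
    subgoal for t i using ut1 img by blast
    subgoal for t i j by (rule theta_pdiff) (use ut2 img in blast)
    done
  also have "\<dots> \<longleftrightarrow> ?R"
  proof -
    have "u (1 - (1 - ymap z)) = T0 z"
      "(\<lambda>i. theta i (\<lambda>x. u (1 - x)) (1 - ymap z)) = (\<lambda>i. of_real ((1 - ymap z)$i) * (- dz z i))"
      "(\<lambda>i j. theta i (theta j (\<lambda>x. u (1 - x))) (1 - ymap z)) =
         (\<lambda>i j. of_real ((1 - ymap z)$i) * ((if i = j then - dz z j else 0) + of_real ((1 - ymap z)$j) * hz z i j))"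
      if z: "z \<in> U" for z
    proof -
      have x: "1 - ymap z \<in> W" using z by (simp add: W_def)
      show "u (1 - (1 - ymap z)) = T0 z" using u_repr[OF z] by (simp add: T0_def)
      show "(\<lambda>i. theta i (\<lambda>x. u (1 - x)) (1 - ymap z)) = (\<lambda>i. of_real ((1 - ymap z)$i) * (- dz z i))"
        using ut1[OF x] pd_u1[OF z] by (simp add: theta_def fun_eq_iff)
      show "(\<lambda>i j. theta i (theta j (\<lambda>x. u (1 - x))) (1 - ymap z)) =
         (\<lambda>i j. of_real ((1 - ymap z)$i) * ((if i = j then - dz z j else 0) + of_real ((1 - ymap z)$j) * hz z i j))"
      proof (intro ext)
        fix i j
        show "theta i (theta j (\<lambda>x. u (1 - x))) (1 - ymap z) =
          of_real ((1 - ymap z)$i) * ((if i = j then - dz z j else 0) + of_real ((1 - ymap z)$j) * hz z i j)"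
          using theta_theta[OF conjunct1[OF ut2[OF x, of i j]]] ut2[OF x, of i j] ut1[OF x, of j] pd_u1[OF z, of j] pd_u2[OF z, of i j]
          by simp
      qed
    qed
    note facts = this
    define P where "P t = LPt k \<alpha> \<gamma> t (u (1 - t)) (\<lambda>i. theta i (\<lambda>x. u (1 - x)) t)
        (\<lambda>i j. theta i (theta j (\<lambda>x. u (1 - x))) t)" for t
    have "(\<forall>t\<in>(\<lambda>y. 1 - y) ` ymap ` U. P t) \<longleftrightarrow> (\<forall>z\<in>U. P (1 - ymap z))" by blast
    also have "\<dots> \<longleftrightarrow> ?R"
      by (rule ball_cong[OF refl]) (simp only: P_def facts)
    finally show ?thesis unfolding P_def .
  qed
  finally show ?thesis .
qed

definition "r1 z i j = R1 k (ymap z) (dz z) (hz z) i j"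
definition "r2 \<alpha> \<gamma> z a = R2 k \<alpha> \<gamma> (ymap z) (T0 z) (dz z) (hz z) a"

lemma r1_antisym: "z \<in> U \<Longrightarrow> r1 z j i = - r1 z i j"
  unfolding r1_def R1_def using hz_sym[of z i j] by (simp add: algebra_simps)

lemma r1_diag: "r1 z i i = 0" unfolding r1_def R1_def by simp

lemma T_forms:
  assumes z: "z \<in> U"
  shows "T1 z = (\<lambda>i. of_real (ymap z $ i) * dz z i)"
    "T2 z = (\<lambda>i j. of_real (ymap z $ i) * ((if i = j then dz z j else 0) + of_real (ymap z $ j) * hz z i j))"
  using T1_dz[OF z] T2_hz[OF z] by (auto simp: fun_eq_iff simp del: ymap_nth)

lemma LPy_iff:
  assumes z: "z \<in> U"
  shows "LPt k \<alpha> \<gamma> (ymap z) (T0 z) (T1 z) (T2 z) \<longleftrightarrow>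
     (\<forall>i j. i < j \<longrightarrow> r1 z i j = 0) \<and> (\<forall>a. r2 \<alpha> \<gamma> z a = 0)"
proof -
  have "LPt k \<alpha> \<gamma> (ymap z) (T0 z) (T1 z) (T2 z) \<longleftrightarrow>
     (\<forall>i j. i < j \<longrightarrow> of_real (ymap z $ i) * of_real (ymap z $ j) * r1 z i j = 0)
        \<and> (\<forall>a. of_real (ymap z $ a) * r2 \<alpha> \<gamma> z a = 0)"
    unfolding T_forms[OF z] r1_def r2_def by (rule GP) (rule hz_sym[OF z])
  also have "\<dots> \<longleftrightarrow> (\<forall>i j. i < j \<longrightarrow> r1 z i j = 0) \<and> (\<forall>a. r2 \<alpha> \<gamma> z a = 0)"
    using ymap_nz'[OF z] by (simp del: ymap_nth)
  finally show ?thesis .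
qed

lemma LPx_iff:
  assumes z: "z \<in> U" and params: "\<gamma>' = of_nat CARD('m option) * k" "\<alpha> = - \<nu>" "\<gamma> = - \<nu> - k + 1"
  shows "LPt k \<alpha> \<gamma>' (1 - ymap z) (T0 z) (\<lambda>i. of_real ((1 - ymap z)$i) * (- dz z i))
       (\<lambda>i j. of_real ((1 - ymap z)$i) * ((if i = j then - dz z j else 0) + of_real ((1 - ymap z)$j) * hz z i j))
    \<longleftrightarrow> (\<forall>i j. i < j \<longrightarrow> of_real ((1 - ymap z)$i) * of_real ((1 - ymap z)$j) * r1 z i j = 0)
        \<and> (\<forall>a. of_real ((1 - ymap z)$a) * (r2 \<alpha> \<gamma> z a + (\<Sum>b\<in>UNIV. r1 z a b)) = 0)"
proof -
  have g': "\<gamma>' = (of_nat CARD('m) + 1) * k" using params(1) by (simp add: card_opt)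
  have "LPt k \<alpha> \<gamma>' (1 - ymap z) (T0 z) (\<lambda>i. of_real ((1 - ymap z)$i) * (- dz z i))
       (\<lambda>i j. of_real ((1 - ymap z)$i) * ((if i = j then - dz z j else 0) + of_real ((1 - ymap z)$j) * hz z i j))
    \<longleftrightarrow> (\<forall>i j. i < j \<longrightarrow> of_real ((1 - ymap z)$i) * of_real ((1 - ymap z)$j) * R1 k (1 - ymap z) (\<lambda>i. - dz z i) (hz z) i j = 0)
        \<and> (\<forall>a. of_real ((1 - ymap z)$a) * R2 k \<alpha> \<gamma>' (1 - ymap z) (T0 z) (\<lambda>i. - dz z i) (hz z) a = 0)"
    by (rule GP) (rule hz_sym[OF z])
  also have "\<dots> \<longleftrightarrow> (\<forall>i j. i < j \<longrightarrow> of_real ((1 - ymap z)$i) * of_real ((1 - ymap z)$j) * r1 z i j = 0)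
        \<and> (\<forall>a. of_real ((1 - ymap z)$a) * (r2 \<alpha> \<gamma> z a + (\<Sum>b\<in>UNIV. r1 z a b)) = 0)"
    unfolding R1_refl R2_refl[OF g' params(2,3)] r1_def r2_def by (simp del: ymap_nth)
  finally show ?thesis .
qed

lemma theta_None: "z \<in> U \<Longrightarrow> theta None \<phi> z = - (\<Sum>b\<in>UNIV. theta (Some b) \<phi> z)"
  using euler sum_opt[of "\<lambda>j. theta j \<phi> z"] by (auto simp: theta_sum_def add_eq_0_iff)

lemma theta_a_None:
  assumes z: "z \<in> U"
  shows "theta (Some a) (theta None \<phi>) z = - (\<Sum>b\<in>UNIV. theta (Some a) (theta (Some b) \<phi>) z)"
proof -
  have "theta (Some a) (theta None \<phi>) z = theta (Some a) (\<lambda>q. (-1) * (\<Sum>b\<in>UNIV. theta (Some b) \<phi> q)) z"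
    by (rule theta_local[OF U_open z]) (simp add: theta_None)
  also have "\<dots> = (-1) * theta (Some a) (\<lambda>q. \<Sum>b\<in>UNIV. theta (Some b) \<phi> q) z"
    by (rule theta_cmult) (use pd_sum[of UNIV "Some a" "\<lambda>b. theta (Some b) \<phi>" z] th_pdiff[OF z] in blast)
  also have "theta (Some a) (\<lambda>q. \<Sum>b\<in>UNIV. theta (Some b) \<phi> q) z = (\<Sum>b\<in>UNIV. theta (Some a) (theta (Some b) \<phi>) z)"
    by (rule theta_sum) (rule th_pdiff[OF z])
  finally show ?thesis by simp
qed

lemma tgt_eq: "\<nu> * (\<nu> + of_nat CARD('m option) * k) / (of_nat CARD('m option))\<^sup>2 = cc * (cc + k)"
  by (simp add: cc_def field_simps power2_eq_square del: of_nat_Suc)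

lemma EE_nz: "EE c y \<noteq> 0" by (simp add: EE_def)

lemma C1:
  assumes z: "z \<in> U" and ab: "a \<noteq> b" and zab: "z $ Some a \<noteq> z $ Some b"
  shows "(Delta k \<nu> (Some a) (Some b) \<phi> z = - (\<nu> * (\<nu> + of_nat CARD('m option) * k) / (of_nat CARD('m option))\<^sup>2) * \<phi> z)
     \<longleftrightarrow> r1 z a b = 0"
proof -
  define ya where "ya = complex_of_real (ymap z $ a)"
  define yb where "yb = complex_of_real (ymap z $ b)"
  define Q where "Q = complex_of_real (z $ Some a + z $ Some b) / complex_of_real (z $ Some a - z $ Some b)"
  define D where "D = Delta k \<nu> (Some a) (Some b) \<phi> z"
  have zn: "z $ None \<noteq> 0" using zpos[OF z, of None] by simp
  have hQ: "Q * (ya - yb) = ya + yb"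
    using zab zn by (simp add: Q_def ya_def yb_def field_simps)
  have yab: "ya - yb \<noteq> 0" using zab zn by (simp add: ya_def yb_def field_simps)
  have Dform: "D = theta (Some a) (theta (Some b) \<phi>) z - k / 2 * Q * (theta (Some a) \<phi> z - theta (Some b) \<phi> z)
      + (cc + k / 2) * (theta (Some a) \<phi> z + theta (Some b) \<phi> z)"
    by (simp add: D_def Delta_def Q_def cc_def)
  have res: "ya * (T2 z a b + k * T1 z b) - yb * (T2 z b a + k * T1 z a) = (ya - yb) * EE cc (ymap z) * (D + cc * (cc + k) * \<phi> z)"
    unfolding T1_def T2_def Dform
    by (rule alg1[OF hQ]) (rule thth_sym[OF z])
  have g1: "(ya * (T2 z a b + k * T1 z b) = yb * (T2 z b a + k * T1 z a)) \<longleftrightarrow> ya * yb * r1 z a b = 0"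
    unfolding T_forms[OF z] ya_def yb_def r1_def
    using GP1[where h="hz z" and p="ymap z" and d="dz z" and k=k and i=a and j=b, OF hz_sym[OF z] ab] by (simp del: ymap_nth)
  have "(D = - (\<nu> * (\<nu> + of_nat CARD('m option) * k) / (of_nat CARD('m option))\<^sup>2) * \<phi> z)
        \<longleftrightarrow> D + cc * (cc + k) * \<phi> z = 0" unfolding tgt_eq by (simp only: mult_minus_left eq_neg_iff_add_eq_0)
  also have "\<dots> \<longleftrightarrow> ya * (T2 z a b + k * T1 z b) - yb * (T2 z b a + k * T1 z a) = 0"
    unfolding res using yab EE_nz[of cc "ymap z"] by simp
  also have "\<dots> \<longleftrightarrow> ya * yb * r1 z a b = 0" using g1 by (simp add: eq_iff_diff_eq_0[symmetric])
  also have "\<dots> \<longleftrightarrow> r1 z a b = 0" using ymap_nz'[OF z, of a] ymap_nz'[OF z, of b]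
    by (simp add: ya_def yb_def del: ymap_nth)
  finally show ?thesis by (simp add: D_def)
qed

lemma C2:
  assumes z: "z \<in> U" and za: "z $ Some a \<noteq> z $ None"
  shows "(Delta k \<nu> (Some a) None \<phi> z = - (\<nu> * (\<nu> + of_nat CARD('m option) * k) / (of_nat CARD('m option))\<^sup>2) * \<phi> z)
     \<longleftrightarrow> r2 (- \<nu>) (- \<nu> - k + 1) z a = 0"
proof -
  define ya where "ya = complex_of_real (ymap z $ a)"
  define Q where "Q = complex_of_real (z $ Some a + z $ None) / complex_of_real (z $ Some a - z $ None)"
  define D where "D = Delta k \<nu> (Some a) None \<phi> z"
  define SA where "SA = (\<Sum>b\<in>UNIV. theta (Some b) \<phi> z)"
  define SB where "SB = (\<Sum>b\<in>UNIV. theta (Some a) (theta (Some b) \<phi>) z)"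
  define m where "m = (of_nat CARD('m) :: complex)"
  define E where "E = EE cc (ymap z)"
  have zn: "z $ None \<noteq> 0" using zpos[OF z, of None] by simp
  have hQ: "Q * (ya - 1) = ya + 1"
    using za zn by (simp add: Q_def ya_def field_simps)
  have ya1: "ya - 1 \<noteq> 0" using za zn by (simp add: ya_def field_simps)
  have m1: "m + 1 \<noteq> 0"
  proof -
    have "m + 1 = of_nat (Suc CARD('m))" by (simp add: m_def)
    thus ?thesis by (metis of_nat_eq_0_iff nat.distinct(1))
  qed
  have hnu: "\<nu> = cc * (m + 1)" using m1 by (simp add: cc_def m_def card_opt add.commute)
  have Dform: "D = - SB - k / 2 * Q * (theta (Some a) \<phi> z - - SA) + (cc + k / 2) * (theta (Some a) \<phi> z + - SA)"
    by (simp add: D_def Delta_def Q_def cc_def theta_None[OF z] theta_a_None[OF z] SA_def SB_def)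
  have ST2: "(\<Sum>b\<in>UNIV. T2 z a b) = E * (m * cc * cc * \<phi> z + cc * SA + m * cc * theta (Some a) \<phi> z + SB)"
    by (simp add: T2_def E_def SA_def SB_def m_def sum.distrib sum_distrib_left algebra_simps)
  have ST1: "(\<Sum>b\<in>UNIV. T1 z b) = E * (m * cc * \<phi> z + SA)"
    by (simp add: T1_def E_def SA_def m_def sum.distrib sum_distrib_left algebra_simps)
  have res: "(\<Sum>b\<in>UNIV. T2 z a b) + (- \<nu> - k + 1 - 1) * T1 z a
      - ya * ((\<Sum>b\<in>UNIV. T2 z a b) + (- \<nu>) * T1 z a + k * ((\<Sum>b\<in>UNIV. T1 z b) + (- \<nu>) * T0 z))
      = (ya - 1) * E * (D + cc * (cc + k) * \<phi> z)"
    unfolding ST2 ST1 Dform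
    unfolding T1_def T0_def E_def[symmetric]
    by (rule alg2[OF hQ hnu])
  have g2: "((\<Sum>b\<in>UNIV. T2 z a b) + (- \<nu> - k + 1 - 1) * T1 z a
      = ya * ((\<Sum>b\<in>UNIV. T2 z a b) + (- \<nu>) * T1 z a + k * ((\<Sum>b\<in>UNIV. T1 z b) + (- \<nu>) * T0 z)))
      \<longleftrightarrow> ya * r2 (- \<nu>) (- \<nu> - k + 1) z a = 0"
    unfolding T_forms[OF z] ya_def r2_def
    by (rule GP2)
  have "(D = - (\<nu> * (\<nu> + of_nat CARD('m option) * k) / (of_nat CARD('m option))\<^sup>2) * \<phi> z)
        \<longleftrightarrow> D + cc * (cc + k) * \<phi> z = 0" unfolding tgt_eq by (simp only: mult_minus_left eq_neg_iff_add_eq_0)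
  also have "\<dots> \<longleftrightarrow> (\<Sum>b\<in>UNIV. T2 z a b) + (- \<nu> - k + 1 - 1) * T1 z a
      - ya * ((\<Sum>b\<in>UNIV. T2 z a b) + (- \<nu>) * T1 z a + k * ((\<Sum>b\<in>UNIV. T1 z b) + (- \<nu>) * T0 z)) = 0"
    unfolding res using ya1 EE_nz[of cc "ymap z"] by (simp add: E_def)
  also have "\<dots> \<longleftrightarrow> ya * r2 (- \<nu>) (- \<nu> - k + 1) z a = 0" using g2 by (simp add: eq_iff_diff_eq_0[symmetric])
  also have "\<dots> \<longleftrightarrow> r2 (- \<nu>) (- \<nu> - k + 1) z a = 0" using ymap_nz'[OF z, of a]
    by (simp add: ya_def del: ymap_nth)
  finally show ?thesis by (simp add: D_def)
qed


lemma cont_ymap: "continuous_on U ymap"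
  unfolding ymap_def
  by (intro continuous_intros) (metis zpos less_irrefl)

lemma cont_yc: "continuous_on U (\<lambda>z. complex_of_real (ymap z $ i))"
  by (intro continuous_intros cont_ymap)

lemma cont_E: "continuous_on U (\<lambda>z. EE cc (ymap z))"
proof (rule continuous_on_compose2[OF continuous_EE cont_ymap])
  show "\<forall>y\<in>ymap ` U. \<forall>a. 0 < y $ a" using ymap_pos by blast
qed auto

lemma cont_T0: "continuous_on U T0"
  unfolding T0_def by (intro continuous_intros cont_E cont0)

lemma cont_T1: "continuous_on U (\<lambda>z. T1 z i)"
  unfolding T1_def by (intro continuous_intros cont_E cont0 cont_th)

lemma cont_T2: "continuous_on U (\<lambda>z. T2 z i j)"
  unfolding T2_def by (intro continuous_intros cont_E cont0 cont_th cont_thth)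

lemma cont_dz: "continuous_on U (\<lambda>z. dz z i)"
  unfolding dz_def by (intro continuous_intros cont_T1 cont_yc) (use ymap_nz' in auto)

lemma cont_hz: "continuous_on U (\<lambda>z. hz z i j)"
proof -
  have "continuous_on U (\<lambda>z. (T2 z i j / of_real (ymap z $ i) - (if i = j then dz z j else 0)) / of_real (ymap z $ j))"
    by (cases "i = j") (auto intro!: continuous_intros cont_T2 cont_yc cont_dz simp del: ymap_nth dest: ymap_nz)
  thus ?thesis unfolding hz_def .
qed

lemma cont_r1: "continuous_on U (\<lambda>z. r1 z i j)"
  unfolding r1_def R1_def by (intro continuous_intros cont_yc cont_hz cont_dz)

lemma cont_r2: "continuous_on U (\<lambda>z. r2 \<alpha> \<gamma> z a)"
  unfolding r2_def R2_def by (intro continuous_intros cont_yc cont_hz cont_dz cont_T0)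

end

lemma density:
  fixes F :: "real^'n::finite \<Rightarrow> complex"
  assumes U: "open U" and F: "continuous_on U F" and z: "z \<in> U" and d: "\<delta> > 0"
    and van: "\<And>t. 0 < t \<Longrightarrow> t < \<delta> \<Longrightarrow> z + t *\<^sub>R v \<in> U \<Longrightarrow> F (z + t *\<^sub>R v) = 0"
  shows "F z = 0"
proof -
  have cF: "isCont F z" using F U z by (simp add: continuous_on_eq_continuous_at)
  have l: "((\<lambda>t. z + t *\<^sub>R v) \<longlongrightarrow> z) (at_right 0)"
    by (auto intro!: tendsto_eq_intros)
  have lim: "((\<lambda>t. F (z + t *\<^sub>R v)) \<longlongrightarrow> F z) (at_right 0)"
    by (rule isCont_tendsto_compose[OF cF l])
  have ev1: "eventually (\<lambda>t. z + t *\<^sub>R v \<in> U) (at_right (0::real))"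
    using topological_tendstoD[OF l U z] .
  have ev2: "eventually (\<lambda>t. 0 < t \<and> t < \<delta>) (at_right (0::real))"
    using d by (auto simp: eventually_at_right_field intro: exI[of _ \<delta>])
  have "eventually (\<lambda>t. F (z + t *\<^sub>R v) = 0) (at_right (0::real))"
    using ev1 ev2 by eventually_elim (use van in auto)
  hence "((\<lambda>t. F (z + t *\<^sub>R v)) \<longlongrightarrow> 0) (at_right 0)" by (rule tendsto_eventually)
  from tendsto_unique[OF _ lim this] show ?thesis by simp
qed


context LS begin

lemma Ly_r: "lauricella_ED (- \<nu>) (\<lambda>_. k) (- \<nu> - k + 1) (ymap ` U) u \<longleftrightarrow>
   (\<forall>z\<in>U. (\<forall>i j. i < j \<longrightarrow> r1 z i j = 0) \<and> (\<forall>a. r2 (- \<nu>) (- \<nu> - k + 1) z a = 0))"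
  unfolding Ly_iff using LPy_iff by blast

lemma Lx_r: "lauricella_ED (- \<nu>) (\<lambda>_. k) (of_nat CARD('m option) * k) ((\<lambda>y. 1 - y) ` ymap ` U) (\<lambda>x. u (1 - x)) \<longleftrightarrow>
   (\<forall>z\<in>U. (\<forall>i j. i < j \<longrightarrow> of_real ((1 - ymap z)$i) * of_real ((1 - ymap z)$j) * r1 z i j = 0)
        \<and> (\<forall>a. of_real ((1 - ymap z)$a) * (r2 (- \<nu>) (- \<nu> - k + 1) z a + (\<Sum>b\<in>UNIV. r1 z a b)) = 0))"
  unfolding Lx_iff using LPx_iff[OF _ refl refl refl] by blast

lemma r1_all: "z \<in> U \<Longrightarrow> (\<forall>i j. i < j \<longrightarrow> r1 z i j = 0) \<Longrightarrow> r1 z a b = 0"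
  using r1_antisym[of z a b] r1_diag[of z a] by (cases a b rule: linorder_cases) auto

lemma pert_Some: "(z + t *\<^sub>R axis (Some a) 1) $ Some b = z $ Some b + (if b = a then t else 0)"
  "(z + t *\<^sub>R axis (Some a) 1) $ None = z $ None"
  by (auto simp: axis_def)

lemma pert_None: "(z + t *\<^sub>R axis None 1) $ Some b = z $ Some b"
  "(z + t *\<^sub>R axis None 1) $ None = z $ None + t"
  by (auto simp: axis_def)

lemma xnz: "z \<in> U \<Longrightarrow> z $ Some c \<noteq> z $ None \<Longrightarrow> complex_of_real ((1 - ymap z)$c) \<noteq> 0"
  using zpos[of z None] by (auto simp: field_simps)

lemma part1:
  "(\<forall>i j. idx_less i j \<longrightarrow> (\<forall>z\<in>U. z $ i \<noteq> z $ j \<longrightarrow>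
              Delta k \<nu> i j \<phi> z
              = - (\<nu> * (\<nu> + of_nat CARD('m option) * k) / (of_nat CARD('m option))\<^sup>2) * \<phi> z))
   \<longleftrightarrow> lauricella_ED (- \<nu>) (\<lambda>_. k) (- \<nu> - k + 1) (ymap ` U) u"
  (is "?H \<longleftrightarrow> _")
proof
  assume H: ?H
  have R1: "r1 z a b = 0" if z: "z \<in> U" and ab: "a < b" for z a b
  proof (cases "z $ Some a = z $ Some b")
    case False
    thus ?thesis using H z ab C1[OF z _ False] by (auto simp: idx_less_def)
  next
    case True
    show ?thesis
    proof (rule density[OF U_open cont_r1 z zero_less_one, where v="axis (Some a) 1"])
      fix t :: real assume t: "0 < t" "t < 1" and z': "z + t *\<^sub>R axis (Some a) 1 \<in> U"
      have ne: "(z + t *\<^sub>R axis (Some a) 1) $ Some a \<noteq> (z + t *\<^sub>R axis (Some a) 1) $ Some b"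
        using True t ab by (simp add: axis_def)
      show "r1 (z + t *\<^sub>R axis (Some a) 1) a b = 0"
        using H z' ab C1[OF z' _ ne] ne by (auto simp: idx_less_def)
    qed
  qed
  have R2: "r2 (- \<nu>) (- \<nu> - k + 1) z a = 0" if z: "z \<in> U" for z a
  proof (cases "z $ Some a = z $ None")
    case False
    thus ?thesis using H z C2[OF z False] by (auto simp: idx_less_def)
  next
    case True
    show ?thesis
    proof (rule density[OF U_open cont_r2 z zero_less_one, where v="axis (Some a) 1"])
      fix t :: real assume t: "0 < t" "t < 1" and z': "z + t *\<^sub>R axis (Some a) 1 \<in> U"
      have ne: "(z + t *\<^sub>R axis (Some a) 1) $ Some a \<noteq> (z + t *\<^sub>R axis (Some a) 1) $ None"
        using True t by (simp add: axis_def)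
      show "r2 (- \<nu>) (- \<nu> - k + 1) (z + t *\<^sub>R axis (Some a) 1) a = 0"
        using H z' C2[OF z' ne] ne by (auto simp: idx_less_def)
    qed
  qed
  show "lauricella_ED (- \<nu>) (\<lambda>_. k) (- \<nu> - k + 1) (ymap ` U) u"
    unfolding Ly_r using R1 R2 by blast
next
  assume L: "lauricella_ED (- \<nu>) (\<lambda>_. k) (- \<nu> - k + 1) (ymap ` U) u"
  hence L': "\<And>z i j. z \<in> U \<Longrightarrow> i < j \<Longrightarrow> r1 z i j = 0" "\<And>z a. z \<in> U \<Longrightarrow> r2 (- \<nu>) (- \<nu> - k + 1) z a = 0"
    unfolding Ly_r by blast+
  show ?H
  proof (intro allI impI ballI)
    fix i j z assume ij: "idx_less i j" and z: "z \<in> U" and ne: "z $ i \<noteq> z $ j"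
    show "Delta k \<nu> i j \<phi> z = - (\<nu> * (\<nu> + of_nat CARD('m option) * k) / (of_nat CARD('m option))\<^sup>2) * \<phi> z"
    proof (cases i)
      case None thus ?thesis using ij by (simp add: idx_less_def)
    next
      case (Some a)
      show ?thesis
      proof (cases j)
        case None
        thus ?thesis using C2[OF z, of a] ne L'(2)[OF z, of a] Some by simp
      next
        case (Some b)
        have ab: "a < b" using ij \<open>i = Some a\<close> Some by (simp add: idx_less_def)
        thus ?thesis using C1[OF z, of a b] ne L'(1)[OF z ab] \<open>i = Some a\<close> Some by simp
      qed
    qed
  qed
qed

lemma part2:
  "lauricella_ED (- \<nu>) (\<lambda>_. k) (- \<nu> - k + 1) (ymap ` U) u
   \<longleftrightarrow> lauricella_ED (- \<nu>) (\<lambda>_. k) (of_nat CARD('m option) * k) ((\<lambda>y. 1 - y) ` ymap ` U) (\<lambda>x. u (1 - x))"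
proof
  assume "lauricella_ED (- \<nu>) (\<lambda>_. k) (- \<nu> - k + 1) (ymap ` U) u"
  hence L': "\<And>z i j. z \<in> U \<Longrightarrow> i < j \<Longrightarrow> r1 z i j = 0" "\<And>z a. z \<in> U \<Longrightarrow> r2 (- \<nu>) (- \<nu> - k + 1) z a = 0"
    unfolding Ly_r by blast+
  have "\<And>z a b. z \<in> U \<Longrightarrow> r1 z a b = 0" using r1_all L'(1) by blast
  thus "lauricella_ED (- \<nu>) (\<lambda>_. k) (of_nat CARD('m option) * k) ((\<lambda>y. 1 - y) ` ymap ` U) (\<lambda>x. u (1 - x))"
    unfolding Lx_r using L'(2) by simp
next
  assume "lauricella_ED (- \<nu>) (\<lambda>_. k) (of_nat CARD('m option) * k) ((\<lambda>y. 1 - y) ` ymap ` U) (\<lambda>x. u (1 - x))"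
  hence X: "\<And>z i j. z \<in> U \<Longrightarrow> i < j \<Longrightarrow> of_real ((1 - ymap z)$i) * of_real ((1 - ymap z)$j) * r1 z i j = 0"
    "\<And>z a. z \<in> U \<Longrightarrow> of_real ((1 - ymap z)$a) * (r2 (- \<nu>) (- \<nu> - k + 1) z a + (\<Sum>b\<in>UNIV. r1 z a b)) = 0"
    unfolding Lx_r by blast+
  define dc where "dc z c = (if z $ Some c \<le> z $ None then 1 else z $ Some c - z $ None)" for z :: "real^'m option" and c
  have dc_pos: "dc z c > 0" for z c by (simp add: dc_def)
  have dc_ne: "(z + t *\<^sub>R axis None 1) $ Some c \<noteq> (z + t *\<^sub>R axis None 1) $ None" if "0 < t" "t < dc z c" for z t c
    using that by (auto simp: axis_def dc_def split: if_splits)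
  have R1: "r1 z a b = 0" if z: "z \<in> U" and ab: "a < b" for z a b
  proof (rule density[OF U_open cont_r1 z, where v="axis None 1" and \<delta>="min (dc z a) (dc z b)"])
    show "0 < min (dc z a) (dc z b)" using dc_pos by simp
    fix t :: real assume t: "0 < t" "t < min (dc z a) (dc z b)" and z': "z + t *\<^sub>R axis None 1 \<in> U"
    have "of_real ((1 - ymap (z + t *\<^sub>R axis None 1))$a) \<noteq> (0::complex)"
      by (rule xnz[OF z' dc_ne]) (use t in auto)
    moreover have "of_real ((1 - ymap (z + t *\<^sub>R axis None 1))$b) \<noteq> (0::complex)"
      by (rule xnz[OF z' dc_ne]) (use t in auto)
    ultimately show "r1 (z + t *\<^sub>R axis None 1) a b = 0" using X(1)[OF z' ab] by (simp only: mult_eq_0_iff) blast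
  qed
  have R1': "r1 z a b = 0" if "z \<in> U" for z a b using r1_all[OF that] R1[OF that] by blast
  have R2: "r2 (- \<nu>) (- \<nu> - k + 1) z a = 0" if z: "z \<in> U" for z a
  proof (rule density[OF U_open cont_r2 z dc_pos, where v="axis None 1"])
    fix t :: real assume t: "0 < t" "t < dc z a" and z': "z + t *\<^sub>R axis None 1 \<in> U"
    have "of_real ((1 - ymap (z + t *\<^sub>R axis None 1))$a) \<noteq> (0::complex)"
      by (rule xnz[OF z' dc_ne[OF t]])
    moreover have "(\<Sum>b\<in>UNIV. r1 (z + t *\<^sub>R axis None 1) a b) = 0" using R1'[OF z'] by simp
    ultimately show "r2 (- \<nu>) (- \<nu> - k + 1) (z + t *\<^sub>R axis None 1) a = 0" using X(2)[OF z', of a]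
      by (simp only: mult_eq_0_iff add_0_right) blast
  qed
  show "lauricella_ED (- \<nu>) (\<lambda>_. k) (- \<nu> - k + 1) (ymap ` U) u"
    unfolding Ly_r using R1 R2 by blast
qed

end


theorem mainTheorem5:
  fixes k \<nu> :: complex
    and U :: "(real, 'm::{finite,linorder} option) vec set"
    and \<phi> :: "(real, 'm option) vec \<Rightarrow> complex"
    and u :: "(real, 'm) vec \<Rightarrow> complex"
  assumes U_open: "open U"
    and U_pos: "\<forall>z\<in>U. \<forall>i. 0 < z $ i"
    and \<phi>_smooth: "smooth_on U \<phi>"
    and euler: "\<forall>z\<in>U. theta_sum \<phi> z = 0"
    and repr: "\<forall>z\<in>U. \<phi> z =
        complex_of_real (\<Prod>a\<in>UNIV. ymap z $ a) powr (- \<nu> / of_nat CARD('m option)) * u (ymap z)"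
  shows "((\<forall>i j. idx_less i j \<longrightarrow> (\<forall>z\<in>U. z $ i \<noteq> z $ j \<longrightarrow>
              Delta k \<nu> i j \<phi> z
              = - (\<nu> * (\<nu> + of_nat CARD('m option) * k) / (of_nat CARD('m option))\<^sup>2) * \<phi> z))
          \<longleftrightarrow> lauricella_ED (- \<nu>) (\<lambda>_. k) (- \<nu> - k + 1) (ymap ` U) u)
       \<and> (lauricella_ED (- \<nu>) (\<lambda>_. k) (- \<nu> - k + 1) (ymap ` U) u
          \<longleftrightarrow> lauricella_ED (- \<nu>) (\<lambda>_. k) (of_nat CARD('m option) * k)
                ((\<lambda>y. 1 - y) ` ymap ` U) (\<lambda>x. u (1 - x)))"
proof -
  interpret L: LS k \<nu> U \<phi> u
    by unfold_locales (use U_open U_pos \<phi>_smooth euler repr in auto)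
  show ?thesis using L.part1 L.part2 by blast
qed

end
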